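(* Let $Q$ be a Dynkin quiver. For every $x\in\mathcal{I}_Q$ there is an isomorphism in $\mathcal{M}_Q$ $$\mu_x Y(x)\otimes Y(\tau^{-1}x)\;\simeq\;F(x)\otimes\bigotimes_{y:\,x\to y}Y(y),$$ the tensor product on the right running over the arrows $x\to y$ of $\mathbb{Z}Q$; equivalently, both sides have the same underlying multiset and the same function.
   Context: $\mathbf{k}$ is an algebraically closed field of characteristic $0$. $Q$ is a Dynkin quiver, $\mathbb{Z}Q$ its repetition quiver (vertices $(i,p)$ with $p$ of fixed parity depending on $i$, alternating along edges; arrows $(t,p)\to(s,p+1)$ and $(s,p)\to(t,p+1)$ for each arrow $s\to t$ of $Q$; $\tau(i,p)=(i,p-2)$), identified via Happel's theorem with the set $\mathcal{I}_Q$ of isomorphism classes of indecomposable objects of $\mathcal{D}:=\mathcal{D}^b(\mathrm{Rep}\,Q)$ ($\tau$ = AR translation, arrows = irreducible morphisms). $\Sigma$ is the shift, $S:=\tau\Sigma$ the Serre functor. For $f:(\mathbb{Z}Q)_0\to\mathbb{Z}$, $\widetilde f(x):=f(x)+f(\tau x)-\sum_{y\to x}f(y)$; $\delta_x$ is the indicator of $\{x\}$. A section of $Q$ in $\mathbb{Z}Q$ is a set $\{(i,p_i)\}_{i\in I}$ with $p_{s(\alpha)}-p_{t(\alpha)}=1$ for every arrow $\alpha$; $Q_x$ is the section containing $x$. $h_x$ is the unique function with $\widetilde{h_x}=\delta_x$ and $h_x(y)=\dim\mathrm{Hom}_{\mathcal D}(x,y)$ for $y\in Q_x$. Objects of $\widetilde{\mathcal{M}_Q}$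 are pairs $(X,f)$, $X$ a multiset of elements of $\mathcal{I}_Q$, $f$ with $\widetilde f$ finitely supported; $\mathcal{M}_Q$ is its additive hull. The Serre tilting at a finite sub-multiset $Z\subseteq X$ is $\mu_Z(X,f):=((X\setminus Z)\sqcup\{Sz:z\in Z\},\ f-\sum_{z\in Z}\delta_z)$; $\mu_x:=\mu_{\{x\}}$. The monoidal structure is $(X,f)\otimes(Y,g):=(X\sqcup Y,f+g)$ (disjoint union of multisets). The hammock multiset $H(x)$ contains exactly $\dim_{\mathbf k}\mathrm{Hom}_{\mathcal D}(x,y)$ copies of each $y\in\mathcal{I}_Q$; the hammock object is $Y(x):=(H(x),h_x)$; and $F(x):=(\{Sx,\Sigma x\},0)$. *)

theory Defs
  imports Main "HOL-Library.Multiset"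
begin

text \<open>A quiver Q is given by a finite vertex set I and a set A of arrows (s,t), meaning s -> t.
Dynkin quivers have no multiple arrows, so a set of pairs suffices.\<close>

definition tits_form :: "'i set \<Rightarrow> ('i \<times> 'i) set \<Rightarrow> ('i \<Rightarrow> int) \<Rightarrow> int" where
  "tits_form I A v = (\<Sum>i\<in>I. (v i)^2) - (\<Sum>(s,t)\<in>A. v s * v t)"

definition dynkin_quiver :: "'i set \<Rightarrow> ('i \<times> 'i) set \<Rightarrow> bool" where
  "dynkin_quiver I A \<longleftrightarrow> finite I \<and> I \<noteq> {} \<and> A \<subseteq> I \<times> I
     \<and> (\<forall>i\<in>I. \<forall>j\<in>I. (i, j) \<in> (A \<union> A\<inverse>)\<^sup>*)
     \<and> (\<forall>v. (\<exists>i\<in>I. v i \<noteq> 0) \<longrightarrow> tits_form I A v > 0)"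

definition alternating :: "('i \<times> 'i) set \<Rightarrow> ('i \<Rightarrow> bool) \<Rightarrow> bool" where
  "alternating A par \<longleftrightarrow> (\<forall>(s,t)\<in>A. par s \<noteq> par t)"

definition zq_V :: "'i set \<Rightarrow> ('i \<Rightarrow> bool) \<Rightarrow> ('i \<times> int) set" where
  "zq_V I par = {(i, p). i \<in> I \<and> (even p \<longleftrightarrow> par i)}"

definition zq_arr :: "'i set \<Rightarrow> ('i \<times> 'i) set \<Rightarrow> ('i \<Rightarrow> bool) \<Rightarrow> 'i \<times> int \<Rightarrow> 'i \<times> int \<Rightarrow> bool" where
  "zq_arr I A par x y \<longleftrightarrow> x \<in> zq_V I par \<and> y \<in> zq_V I par \<and> snd y = snd x + 1 \<and>
     (\<exists>(s,t)\<in>A. (fst x = t \<and> fst y = s) \<or> (fst x = s \<and> fst y = t))"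

definition zq_preds where "zq_preds I A par y = {z. zq_arr I A par z y}"
definition zq_succs where "zq_succs I A par x = {y. zq_arr I A par x y}"

definition tau :: "'i \<times> int \<Rightarrow> 'i \<times> int" where "tau x = (fst x, snd x - 2)"
definition tau_inv :: "'i \<times> int \<Rightarrow> 'i \<times> int" where "tau_inv x = (fst x, snd x + 2)"

definition delta :: "'i \<times> int \<Rightarrow> 'i \<times> int \<Rightarrow> int" where
  "delta x y = (if y = x then 1 else 0)"

definition tilde :: "'i set \<Rightarrow> ('i \<times> 'i) set \<Rightarrow> ('i \<Rightarrow> bool) \<Rightarrow> ('i \<times> int \<Rightarrow> int) \<Rightarrow> 'i \<times> int \<Rightarrow> int" where
  "tilde I A par f x = f x + f (tau x) - (\<Sum>y\<in>zq_preds I A par x. f y)"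

text \<open>Hammock knitting: layer k consists of the vertices (i, snd x + k).  The value at x is 1;
otherwise the value is max(0, sum over predecessors - value at tau).  Returns layer k.\<close>
fun knit :: "'i set \<Rightarrow> ('i \<times> 'i) set \<Rightarrow> ('i \<Rightarrow> bool) \<Rightarrow> 'i \<times> int \<Rightarrow> nat \<Rightarrow> 'i \<Rightarrow> int" where
  "knit I A par x 0 = (\<lambda>i. if i = fst x then 1 else 0)"
| "knit I A par x (Suc 0) = (let a = knit I A par x 0 in
     (\<lambda>i. max 0 (\<Sum>j\<in>{j. zq_arr I A par (j, snd x) (i, snd x + 1)}. a j)))"
| "knit I A par x (Suc (Suc k)) = (let a = knit I A par x (Suc k); b = knit I A par x k in
     (\<lambda>i. max 0 ((\<Sum>j\<in>{j. zq_arr I A par (j, snd x + int k + 1) (i, snd x + int k + 2)}. a j) - b i)))"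

definition hom_dim :: "'i set \<Rightarrow> ('i \<times> 'i) set \<Rightarrow> ('i \<Rightarrow> bool) \<Rightarrow> 'i \<times> int \<Rightarrow> 'i \<times> int \<Rightarrow> int" where
  "hom_dim I A par x y = (if snd y < snd x then 0 else knit I A par x (nat (snd y - snd x)) (fst y))"

text \<open>Serre functor on objects, characterised by Serre duality dim Hom(y, S x) = dim Hom(x, y).\<close>
definition serre :: "'i set \<Rightarrow> ('i \<times> 'i) set \<Rightarrow> ('i \<Rightarrow> bool) \<Rightarrow> 'i \<times> int \<Rightarrow> 'i \<times> int" where
  "serre I A par x = (THE z. z \<in> zq_V I par \<and>
      (\<forall>y\<in>zq_V I par. hom_dim I A par y z = hom_dim I A par x y))"

text \<open>Shift: since S = tau Sigma, Sigma = tau^{-1} S.\<close>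
definition shift :: "'i set \<Rightarrow> ('i \<times> 'i) set \<Rightarrow> ('i \<Rightarrow> bool) \<Rightarrow> 'i \<times> int \<Rightarrow> 'i \<times> int" where
  "shift I A par x = tau_inv (serre I A par x)"

definition is_section :: "'i set \<Rightarrow> ('i \<times> 'i) set \<Rightarrow> ('i \<times> int) set \<Rightarrow> bool" where
  "is_section I A S \<longleftrightarrow> (\<exists>p :: 'i \<Rightarrow> int. (\<forall>(s,t)\<in>A. p s - p t = 1) \<and> S = {(i, p i) | i. i \<in> I})"

definition section_of :: "'i set \<Rightarrow> ('i \<times> 'i) set \<Rightarrow> 'i \<times> int \<Rightarrow> ('i \<times> int) set" where
  "section_of I A x = (THE S. is_section I A S \<and> x \<in> S)"

definition hfun :: "'i set \<Rightarrow> ('i \<times> 'i) set \<Rightarrow> ('i \<Rightarrow> bool) \<Rightarrow> 'i \<times> int \<Rightarrow> 'i \<times> int \<Rightarrow> int" where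
  "hfun I A par x = (THE f. (\<forall>v\<in>zq_V I par. tilde I A par f v = delta x v)
      \<and> (\<forall>y\<in>section_of I A x. f y = hom_dim I A par x y)
      \<and> (\<forall>v. v \<notin> zq_V I par \<longrightarrow> f v = 0))"

type_synonym 'i obj = "('i \<times> int) multiset \<times> ('i \<times> int \<Rightarrow> int)"

definition hammock :: "'i set \<Rightarrow> ('i \<times> 'i) set \<Rightarrow> ('i \<Rightarrow> bool) \<Rightarrow> 'i \<times> int \<Rightarrow> ('i \<times> int) multiset" where
  "hammock I A par x = (THE M. \<forall>y. count M y =
      (if y \<in> zq_V I par then nat (hom_dim I A par x y) else 0))"

definition Yobj :: "'i set \<Rightarrow> ('i \<times> 'i) set \<Rightarrow> ('i \<Rightarrow> bool) \<Rightarrow> 'i \<times> int \<Rightarrow> 'i obj" where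
  "Yobj I A par x = (hammock I A par x, hfun I A par x)"

definition Fobj :: "'i set \<Rightarrow> ('i \<times> 'i) set \<Rightarrow> ('i \<Rightarrow> bool) \<Rightarrow> 'i \<times> int \<Rightarrow> 'i obj" where
  "Fobj I A par x = ({#serre I A par x, shift I A par x#}, (\<lambda>_. 0))"

definition mu :: "'i set \<Rightarrow> ('i \<times> 'i) set \<Rightarrow> ('i \<Rightarrow> bool) \<Rightarrow> 'i \<times> int \<Rightarrow> 'i obj \<Rightarrow> 'i obj" where
  "mu I A par z Xf = (fst Xf - {#z#} + {#serre I A par z#}, (\<lambda>v. snd Xf v - delta z v))"

definition tensor :: "'i obj \<Rightarrow> 'i obj \<Rightarrow> 'i obj" where
  "tensor Xf Yg = (fst Xf + fst Yg, (\<lambda>v. snd Xf v + snd Yg v))"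

definition tensor_set :: "('a \<Rightarrow> 'i obj) \<Rightarrow> 'a set \<Rightarrow> 'i obj" where
  "tensor_set G S = ((\<Sum>a\<in>S. fst (G a)), (\<lambda>v. \<Sum>a\<in>S. snd (G a) v))"

definition mq_iso :: "'i set \<Rightarrow> ('i \<Rightarrow> bool) \<Rightarrow> 'i obj \<Rightarrow> 'i obj \<Rightarrow> bool" where
  "mq_iso I par Xf Yg \<longleftrightarrow> fst Xf = fst Yg \<and> (\<forall>v\<in>zq_V I par. snd Xf v = snd Yg v)"

end

theory Submission
  imports Defs Complex_Main
begin

definition nbr :: "('i \<times> 'i) set \<Rightarrow> 'i \<Rightarrow> 'i set" where
  "nbr A i = {j. (i, j) \<in> A \<or> (j, i) \<in> A}"

definition fl :: "'i \<times> int \<Rightarrow> 'i \<times> int" where "fl v = (fst v, - snd v)"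

lemma fl_fl[simp]: "fl (fl v) = v" by (simp add: fl_def)
lemma fl_inj: "fl a = fl b \<longleftrightarrow> a = b" by (metis fl_fl)
lemma snd_fl[simp]: "snd (fl v) = - snd v" and fst_fl[simp]: "fst (fl v) = fst v" by (simp_all add: fl_def)
lemma tau_simps[simp]: "fst (tau v) = fst v" "snd (tau v) = snd v - 2"
  "fst (tau_inv v) = fst v" "snd (tau_inv v) = snd v + 2" by (simp_all add: tau_def tau_inv_def)
lemma tau_tau_inv[simp]: "tau (tau_inv v) = v" "tau_inv (tau v) = v" by (simp_all add: tau_def tau_inv_def)
lemma fl_tau: "fl (tau v) = tau_inv (fl v)" "fl (tau_inv v) = tau (fl v)"
  by (simp_all add: tau_def tau_inv_def fl_def)
lemma tau_inj: "tau a = tau b \<longleftrightarrow> a = b" by (metis tau_tau_inv(2))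
lemma tau_inv_inj: "tau_inv a = tau_inv b \<longleftrightarrow> a = b" by (metis tau_tau_inv(1))
lemma prod_eqI': "fst a = fst b \<Longrightarrow> snd a = snd b \<Longrightarrow> a = b" by (simp add: prod_eq_iff)

lemma tits_unit:
  assumes "finite A" "i \<in> I" "finite I"
  shows "tits_form I A (\<lambda>j. if j = i then 1 else 0) = 1 - (if (i,i) \<in> A then 1 else 0)"
proof -
  have "(\<Sum>k\<in>I. ((if k = i then 1 else 0)::int)^2) = 1"
  proof -
    have "(\<Sum>k\<in>I. ((if k = i then 1 else 0)::int)^2) = (\<Sum>k\<in>I. (if k = i then 1 else 0))"
      by (rule sum.cong) auto
    then show ?thesis using assms by (simp add: sum.delta)
  qed
  moreover have "(\<Sum>(s,t)\<in>A. (if s = i then 1 else 0) * (if t = i then (1::int) else 0))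
      = (\<Sum>x\<in>A. if x = (i,i) then 1 else 0)"
    by (rule sum.cong) (auto split: if_splits)
  moreover have "\<dots> = (if (i,i) \<in> A then 1 else 0)" using assms by (simp add: sum.delta)
  ultimately show ?thesis unfolding tits_form_def by simp
qed

locale dq =
  fixes I :: "'i set" and A :: "('i \<times> 'i) set" and par :: "'i \<Rightarrow> bool"
  assumes dyn: "dynkin_quiver I A" and alt: "alternating A par"
begin

abbreviation "V \<equiv> zq_V I par"
abbreviation "H \<equiv> hom_dim I A par"
abbreviation "preds \<equiv> zq_preds I A par"
abbreviation "succs \<equiv> zq_succs I A par"
abbreviation "arr \<equiv> zq_arr I A par"
abbreviation "tits \<equiv> tits_form I A"
abbreviation "nb \<equiv> nbr A"

lemma finI: "finite I" and AI: "A \<subseteq> I \<times> I" and Ine: "I \<noteq> {}"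
  and conn: "\<And>i j. i \<in> I \<Longrightarrow> j \<in> I \<Longrightarrow> (i, j) \<in> (A \<union> A\<inverse>)\<^sup>*"
  and pos: "\<And>v. (\<exists>i\<in>I. v i \<noteq> 0) \<Longrightarrow> tits v > 0"
  using dyn unfolding dynkin_quiver_def by auto

lemma finA: "finite A" using finI AI finite_subset by blast

lemma tits_pos_ge1: "(\<exists>i\<in>I. v i \<noteq> 0) \<Longrightarrow> tits v \<ge> 1" using pos by force

lemma no_loop: "(i, i) \<notin> A"
proof
  assume a: "(i,i) \<in> A"
  then have "i \<in> I" using AI by auto
  then have "tits (\<lambda>j. if j = i then 1 else 0) > 0" by (intro pos) auto
  with tits_unit[OF finA \<open>i \<in> I\<close> finI] a show False by simp
qed

lemma no_2cyc: assumes "(i, j) \<in> A" shows "(j, i) \<notin> A"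
proof
  assume b: "(j,i) \<in> A"
  have ij: "i \<noteq> j" using assms no_loop by auto
  have iI: "i \<in> I" and jI: "j \<in> I" using assms AI by auto
  define v :: "'i \<Rightarrow> int" where "v = (\<lambda>k. if k = i \<or> k = j then 1 else 0)"
  have "tits v > 0" using iI by (intro pos) (auto simp: v_def)
  moreover have "(\<Sum>k\<in>I. (v k)^2) = 2"
  proof -
    have "(\<Sum>k\<in>I. (v k)^2) = (\<Sum>k\<in>I. (if k \<in> {i,j} then 1 else 0))"
      by (rule sum.cong) (auto simp: v_def)
    also have "\<dots> = int (card (I \<inter> {i,j}))" by (simp add: sum.If_cases finI Int_def)
    also have "I \<inter> {i,j} = {i,j}" using iI jI by auto
    finally show ?thesis using ij by simp
  qed
  moreover have "(\<Sum>(s,t)\<in>A. v s * v t) \<ge> 2"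
  proof -
    have "(\<Sum>(s,t)\<in>{(i,j),(j,i)}. v s * v t) \<le> (\<Sum>(s,t)\<in>A. v s * v t)"
      using assms b finA by (intro sum_mono2) (auto simp: v_def)
    moreover have "(\<Sum>(s,t)\<in>{(i,j),(j,i)}. v s * v t) = 2" using ij by (simp add: v_def)
    ultimately show ?thesis by simp
  qed
  ultimately show False unfolding tits_form_def by simp
qed

lemma alt': "(s,t) \<in> A \<Longrightarrow> par s \<noteq> par t" using alt unfolding alternating_def by auto

lemma nbr_I: "nb i \<subseteq> I" using AI unfolding nbr_def by auto
lemma nbr_fin: "finite (nb i)" using nbr_I finI finite_subset by blast
lemma nbr_irr: "i \<notin> nb i" using no_loop unfolding nbr_def by auto
lemma nbr_sym: "j \<in> nb i \<longleftrightarrow> i \<in> nb j" unfolding nbr_def by auto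
lemma nbr_par: "j \<in> nb i \<Longrightarrow> par j \<noteq> par i" using alt' unfolding nbr_def by fastforce
lemma nbr_empty: "i \<notin> I \<Longrightarrow> nb i = {}" using AI unfolding nbr_def by auto

lemma V_iff: "(i, q) \<in> V \<longleftrightarrow> i \<in> I \<and> (even q \<longleftrightarrow> par i)" unfolding zq_V_def by auto
lemma V_iff': "v \<in> V \<longleftrightarrow> fst v \<in> I \<and> (even (snd v) \<longleftrightarrow> par (fst v))"
  using V_iff[of "fst v" "snd v"] by simp

lemma V_tau: "tau v \<in> V \<longleftrightarrow> v \<in> V" "tau_inv v \<in> V \<longleftrightarrow> v \<in> V" "fl v \<in> V \<longleftrightarrow> v \<in> V"
  unfolding V_iff' by auto

lemma V_nbr: "(i, q) \<in> V \<Longrightarrow> j \<in> nb i \<Longrightarrow> (j, q + 1) \<in> V \<and> (j, q - 1) \<in> V"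
  using nbr_par[of j i] nbr_I unfolding V_iff by auto

lemma V_next: "(i, q) \<in> V \<Longrightarrow> (i, q + 1) \<notin> V" "(i, q) \<in> V \<Longrightarrow> (i, q - 1) \<notin> V"
  unfolding V_iff by auto

lemma arr_iff: "arr x y \<longleftrightarrow> x \<in> V \<and> y \<in> V \<and> snd y = snd x + 1 \<and> fst x \<in> nb (fst y)"
  unfolding zq_arr_def nbr_def by auto

lemma preds_eq: "y \<in> V \<Longrightarrow> preds y = (\<lambda>j. (j, snd y - 1)) ` nb (fst y)"
  unfolding zq_preds_def arr_iff
  using V_nbr[of "fst y" "snd y"] by (auto simp: image_iff)

lemma succs_eq: "x \<in> V \<Longrightarrow> succs x = (\<lambda>j. (j, snd x + 1)) ` nb (fst x)"
  unfolding zq_succs_def arr_iff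
  using V_nbr[of "fst x" "snd x"] by (auto simp: image_iff nbr_sym)

lemma preds_nonV: "y \<notin> V \<Longrightarrow> preds y = {}" unfolding zq_preds_def arr_iff by auto
lemma succs_nonV: "x \<notin> V \<Longrightarrow> succs x = {}" unfolding zq_succs_def arr_iff by auto

lemma preds_fin: "finite (preds y)"
  by (cases "y \<in> V") (simp_all add: preds_eq nbr_fin preds_nonV)
lemma succs_fin: "finite (succs y)"
  by (cases "y \<in> V") (simp_all add: succs_eq nbr_fin succs_nonV)

lemma sum_preds: "y \<in> V \<Longrightarrow> (\<Sum>w\<in>preds y. f w) = (\<Sum>j\<in>nb (fst y). f (j, snd y - 1))"
  by (simp add: preds_eq sum.reindex inj_on_def)

lemma sum_succs: "x \<in> V \<Longrightarrow> (\<Sum>w\<in>succs x. f w) = (\<Sum>j\<in>nb (fst x). f (j, snd x + 1))"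
  by (simp add: succs_eq sum.reindex inj_on_def)

lemma preds_layer: "w \<in> preds y \<Longrightarrow> snd w = snd y - 1 \<and> w \<in> V"
  unfolding zq_preds_def arr_iff by auto
lemma succs_layer: "w \<in> succs y \<Longrightarrow> snd w = snd y + 1 \<and> w \<in> V"
  unfolding zq_succs_def arr_iff by auto

lemma preds_tau_inv: "preds (tau_inv a) = succs a"
proof (cases "a \<in> V")
  case True
  then have "tau_inv a \<in> V" using V_tau by simp
  then show ?thesis using True by (auto simp: preds_eq succs_eq)
next
  case False
  then show ?thesis using V_tau preds_nonV succs_nonV by simp
qed

lemma preds_fl: "preds (fl a) = fl ` succs a"
proof (cases "a \<in> V")
  case True
  then have "fl a \<in> V" using V_tau by simp
  then show ?thesis using True by (auto simp: preds_eq succs_eq fl_def image_iff)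
next
  case False
  then show ?thesis using V_tau preds_nonV succs_nonV by simp
qed

lemma succ_iff_pred: "b \<in> succs a \<longleftrightarrow> a \<in> preds b"
  unfolding zq_succs_def zq_preds_def by simp

end

fun knitg :: "(int \<Rightarrow> int) \<Rightarrow> 'i set \<Rightarrow> ('i \<times> 'i) set \<Rightarrow> ('i \<Rightarrow> bool) \<Rightarrow> 'i \<times> int \<Rightarrow> nat \<Rightarrow> 'i \<Rightarrow> int" where
  "knitg cl I A par x 0 = (\<lambda>i. if i = fst x then 1 else 0)"
| "knitg cl I A par x (Suc 0) =
     (\<lambda>i. cl (\<Sum>j\<in>{j. zq_arr I A par (j, snd x) (i, snd x + 1)}. knitg cl I A par x 0 j))"
| "knitg cl I A par x (Suc (Suc k)) =
     (\<lambda>i. cl ((\<Sum>j\<in>{j. zq_arr I A par (j, snd x + int k + 1) (i, snd x + int k + 2)}. knitg cl I A par x (Suc k) j) - knitg cl I A par x k i))"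

lemma knit_eq: "knit I A par x k = knitg (max 0) I A par x k"
  by (induction I A par x k rule: knit.induct) (simp_all add: Let_def)

definition homg :: "(int \<Rightarrow> int) \<Rightarrow> 'i set \<Rightarrow> ('i \<times> 'i) set \<Rightarrow> ('i \<Rightarrow> bool) \<Rightarrow> 'i \<times> int \<Rightarrow> 'i \<times> int \<Rightarrow> int" where
  "homg cl I A par z v = (if snd v < snd z then 0 else knitg cl I A par z (nat (snd v - snd z)) (fst v))"

lemma hom_dim_eq: "hom_dim I A par = homg (max 0) I A par"
  by (intro ext) (simp add: hom_dim_def homg_def knit_eq)

lemma layer_induct:
  fixes P :: "'a \<times> int \<Rightarrow> bool"
  assumes base: "\<And>v. snd v < L \<Longrightarrow> P v"
    and step: "\<And>v. snd v \<ge> L \<Longrightarrow> (\<And>w. snd w < snd v \<Longrightarrow> P w) \<Longrightarrow> P v"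
  shows "P v"
proof -
  have "\<forall>v::'a \<times> int. nat (snd v - L) = n \<longrightarrow> P v" for n
  proof (induction n rule: less_induct)
    case (less n)
    show ?case
    proof (intro allI impI)
      fix v :: "'a \<times> int" assume n: "nat (snd v - L) = n"
      show "P v"
      proof (cases "snd v < L")
        case True then show ?thesis by (rule base)
      next
        case False
        show ?thesis
        proof (rule step)
          show "snd v \<ge> L" using False by simp
          fix w :: "'a \<times> int" assume w: "snd w < snd v"
          show "P w"
          proof (cases "snd w < L")
            case True then show ?thesis by (rule base)
          next
            case False
            then have "nat (snd w - L) < n" using n w by simp
            then show ?thesis using less by blast
          qed
        qed
      qed
    qed
  qed
  then show ?thesis by blast
qed

lemma layer_induct_down:
  fixes P :: "'a \<times> int \<Rightarrow> bool"
  assumes base: "\<And>v. snd v > L \<Longrightarrow> P v"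
    and step: "\<And>v. snd v \<le> L \<Longrightarrow> (\<And>w. snd w > snd v \<Longrightarrow> P w) \<Longrightarrow> P v"
  shows "P v"
proof -
  have "\<forall>v::'a \<times> int. nat (L - snd v) = n \<longrightarrow> P v" for n
  proof (induction n rule: less_induct)
    case (less n)
    show ?case
    proof (intro allI impI)
      fix v :: "'a \<times> int" assume n: "nat (L - snd v) = n"
      show "P v"
      proof (cases "snd v > L")
        case True then show ?thesis by (rule base)
      next
        case False
        show ?thesis
        proof (rule step)
          show "snd v \<le> L" using False by simp
          fix w :: "'a \<times> int" assume w: "snd w > snd v"
          show "P w"
          proof (cases "snd w > L")
            case True then show ?thesis by (rule base)
          next
            case False
            then have "nat (L - snd w) < n" using n w by simp
            then show ?thesis using less by blast
          qed
        qed
      qed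
    qed
  qed
  then show ?thesis by blast
qed

context dq
begin

abbreviation "hg cl \<equiv> homg cl I A par"

lemma knitg_nonV:
  assumes cl0: "cl 0 = 0" and z: "z \<in> V"
  shows "(i, snd z + int k) \<notin> V \<Longrightarrow> knitg cl I A par z k i = 0"
proof (induction k arbitrary: i rule: less_induct)
  case (less k)
  show ?case
  proof (cases k)
    case 0
    then have "i \<noteq> fst z" using less.prems z by (cases z) auto
    then show ?thesis using 0 by simp
  next
    case (Suc k1)
    show ?thesis
    proof (cases k1)
      case 0
      have "{j. arr (j, snd z) (i, snd z + 1)} = {}" using less.prems Suc 0
        by (auto simp: arr_iff)
      then show ?thesis using Suc 0 cl0 by simp
    next
      case (Suc k2)
      have "(i, snd z + int k2 + 2) \<notin> V" using less.prems \<open>k = Suc k1\<close> Suc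
        by (simp add: algebra_simps)
      then have e: "{j. arr (j, snd z + int k2 + 1) (i, snd z + int k2 + 2)} = {}"
        by (auto simp: arr_iff)
      have "(i, snd z + int k2) \<notin> V" using less.prems \<open>k = Suc k1\<close> Suc
        by (auto simp: V_iff even_add)
      then have "knitg cl I A par z k2 i = 0" using less.IH \<open>k = Suc k1\<close> Suc by simp
      then show ?thesis using \<open>k = Suc k1\<close> Suc e cl0 by simp
    qed
  qed
qed

lemma sum_preds_gen: "(\<Sum>w\<in>preds v. f w) = (\<Sum>j\<in>{j. arr (j, snd v - 1) v}. f (j, snd v - 1))"
proof -
  have "preds v = (\<lambda>j. (j, snd v - 1)) ` {j. arr (j, snd v - 1) v}"
    unfolding zq_preds_def arr_iff by (auto simp: image_iff)
  then show ?thesis by (simp add: sum.reindex inj_on_def)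
qed

lemma GC:
  assumes cl0: "cl 0 = 0" and z: "z \<in> V"
  shows "hg cl z v = (if v \<notin> V \<or> snd v < snd z then 0 else if v = z then 1
            else cl ((\<Sum>w\<in>preds v. hg cl z w) - hg cl z (tau v)))"
proof (cases "snd v < snd z")
  case True then show ?thesis by (simp add: homg_def)
next
  case False
  obtain k where k: "snd v = snd z + int k" using False by (metis add.commute le_add_diff_inverse2 nonneg_int_cases not_less diff_ge_0_iff_ge)
  obtain i where i: "fst v = i" by simp
  have vv: "v = (i, snd z + int k)" using i k by (simp add: prod_eq_iff)
  have hk: "hg cl z v = knitg cl I A par z k i" using k i by (simp add: homg_def)
  show ?thesis
  proof (cases "v \<in> V")
    case False
    then show ?thesis using hk knitg_nonV[where cl=cl, OF cl0 z, of i k] vv by simp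
  next
    case vV: True
    have low: "hg cl z w = 0" if "snd w < snd z" for w using that by (simp add: homg_def)
    show ?thesis
    proof (cases k)
      case 0
      show ?thesis
      proof (cases "v = z")
        case True then show ?thesis using hk 0 vv z by (simp add: homg_def)
      next
        case False
        then have "i \<noteq> fst z" using vv 0 by (cases z) auto
        moreover have "(\<Sum>w\<in>preds v. hg cl z w) = 0"
        proof (rule sum.neutral, intro ballI)
          fix w assume "w \<in> preds v"
          then have "snd w < snd z" using preds_layer[of w v] k 0 by simp
          then show "hg cl z w = 0" by (rule low)
        qed
        moreover have "hg cl z (tau v) = 0" using low k 0 by simp
        ultimately show ?thesis using hk 0 vV False cl0 by simp
      qed
    next
      case (Suc k1)
      have vz: "v \<noteq> z" using k Suc by auto
      have sp: "(\<Sum>w\<in>preds v. hg cl z w) = (\<Sum>j\<in>{j. arr (j, snd z + int k1) (i, snd z + int k1 + 1)}. knitg cl I A par z k1 j)"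
        unfolding sum_preds_gen using k Suc vv
        by (intro sum.cong) (auto simp: homg_def algebra_simps)
      show ?thesis
      proof (cases k1)
        case 0
        have "hg cl z (tau v) = 0" using low k Suc 0 by simp
        then show ?thesis using hk Suc 0 vV vz sp False by simp
      next
        case (Suc k2)
        have "hg cl z (tau v) = knitg cl I A par z k2 i" using k \<open>k = Suc k1\<close> Suc vv
          by (simp add: homg_def)
        moreover have "{j. arr (j, snd z + int k1) (i, snd z + int k1 + 1)}
            = {j. arr (j, snd z + int k2 + 1) (i, snd z + int k2 + 2)}" using Suc by (simp add: algebra_simps)
        ultimately show ?thesis using hk \<open>k = Suc k1\<close> Suc vV vz sp False by simp
      qed
    qed
  qed
qed

lemma rec_uniq:
  assumes cl0: "cl 0 = 0" and z: "z \<in> V"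
    and f: "\<And>v. f v = (if v \<notin> V \<or> snd v < snd z then 0 else if v = z then 1
            else cl ((\<Sum>w\<in>preds v. f w) - f (tau v)))"
  shows "f v = hg cl z v"
proof (induction v rule: layer_induct[where L="snd z"])
  case (1 v)
  then show ?case using f[of v] GC[where cl=cl, OF cl0 z, of v] by simp
next
  case (2 v)
  have "(\<Sum>w\<in>preds v. f w) = (\<Sum>w\<in>preds v. hg cl z w)"
    by (rule sum.cong) (use 2 preds_layer in auto)
  moreover have "f (tau v) = hg cl z (tau v)" using 2 by simp
  ultimately show ?case using f[of v] GC[where cl=cl, OF cl0 z, of v] by simp
qed

lemma preds_tau_inv_img: "preds (tau_inv v) = tau_inv ` preds v"
proof (cases "v \<in> V")
  case True
  then have "tau_inv v \<in> V" using V_tau by simp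
  then show ?thesis using True by (auto simp: preds_eq image_iff tau_inv_def)
next
  case False
  then show ?thesis using V_tau preds_nonV by simp
qed

lemma homg_shift:
  assumes cl0: "cl 0 = 0" and z: "z \<in> V"
  shows "hg cl (tau_inv z) (tau_inv v) = hg cl z v"
proof -
  have z': "tau_inv z \<in> V" using z V_tau by simp
  define f where "f v = hg cl (tau_inv z) (tau_inv v)" for v
  have "f v = hg cl z v" for v
  proof (rule rec_uniq[where cl=cl, OF cl0 z])
    fix v
    have "(\<Sum>w\<in>preds (tau_inv v). hg cl (tau_inv z) w) = (\<Sum>w\<in>preds v. f w)"
      unfolding preds_tau_inv_img f_def by (simp add: sum.reindex inj_on_def tau_inv_inj)
    moreover have "tau (tau_inv v) = tau_inv (tau v)" by (simp add: tau_def tau_inv_def)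
    ultimately show "f v = (if v \<notin> V \<or> snd v < snd z then 0 else if v = z then 1
            else cl ((\<Sum>w\<in>preds v. f w) - f (tau v)))"
      unfolding f_def using GC[where cl=cl, OF cl0 z', of "tau_inv v"] by (simp add: V_tau tau_inv_inj)
  qed
  then show ?thesis unfolding f_def .
qed

lemma homg_shift': "cl 0 = 0 \<Longrightarrow> z \<in> V \<Longrightarrow> hg cl (tau_inv z) v = hg cl z (tau v)"
  using homg_shift[of cl z "tau v"] by simp

lemma homg_nonV: "cl 0 = 0 \<Longrightarrow> z \<in> V \<Longrightarrow> v \<notin> V \<Longrightarrow> hg cl z v = 0"
  using GC by simp
lemma homg_low: "snd v < snd z \<Longrightarrow> hg cl z v = 0" by (simp add: homg_def)
lemma homg_self: "cl 0 = 0 \<Longrightarrow> z \<in> V \<Longrightarrow> hg cl z z = 1" using GC[of cl z z] by simp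
lemma homg_same_layer: "cl 0 = 0 \<Longrightarrow> z \<in> V \<Longrightarrow> snd v = snd z \<Longrightarrow> hg cl z v = (if v = z then 1 else 0)"
proof -
  assume a: "cl 0 = 0" "z \<in> V" "snd v = snd z"
  have "(\<Sum>w\<in>preds v. hg cl z w) = 0"
  proof (rule sum.neutral, intro ballI)
    fix w assume "w \<in> preds v"
    then have "snd w < snd z" using preds_layer[of w v] a by simp
    then show "hg cl z w = 0" by (rule homg_low)
  qed
  moreover have "hg cl z (tau v) = 0" using a homg_low by simp
  ultimately show ?thesis using GC[where cl=cl, OF a(1,2), of v] a by (auto simp: homg_nonV)
qed

end

definition qf :: "('i \<Rightarrow> 'i \<Rightarrow> rat) \<Rightarrow> 'i set \<Rightarrow> ('i \<Rightarrow> rat) \<Rightarrow> rat" where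
  "qf c I v = (\<Sum>i\<in>I. \<Sum>j\<in>I. c i j * v i * v j)"

lemma abs_le_sq1: "\<bar>x::rat\<bar> \<le> x * x + 1"
proof (cases "\<bar>x\<bar> \<le> 1")
  case True
  have "0 \<le> x * x" by simp
  then show ?thesis using True by linarith
next
  case False
  then have "\<bar>x\<bar> * 1 \<le> \<bar>x\<bar> * \<bar>x\<bar>" by (intro mult_left_mono) auto
  then show ?thesis by (simp add: abs_mult_self_eq)
qed

lemma qf_cong: "(\<And>i. i \<in> I \<Longrightarrow> v i = w i) \<Longrightarrow> qf c I v = qf c I w"
  unfolding qf_def by (intro sum.cong) auto

lemma form_finite:
  fixes c :: "'i \<Rightarrow> 'i \<Rightarrow> rat"
  assumes "finite I"
    and "\<And>v::'i \<Rightarrow> rat. (\<exists>i\<in>I. v i \<noteq> 0) \<Longrightarrow> 0 < qf c I v"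
  shows "finite {v :: 'i \<Rightarrow> int. (\<forall>i. i \<notin> I \<longrightarrow> v i = 0) \<and> qf c I (\<lambda>i. of_int (v i)) \<le> B}"
  using assms
proof (induction I arbitrary: c B rule: finite_induct)
  case empty
  have "{v :: 'i \<Rightarrow> int. (\<forall>i. i \<notin> {} \<longrightarrow> v i = 0) \<and> qf c {} (\<lambda>i. of_int (v i)) \<le> B} \<subseteq> {\<lambda>_. 0}"
    by auto
  then show ?case using finite_subset by blast
next
  case (insert a J)
  note posI = insert.prems
  define d where "d = c a a"
  define L where "L v = (\<Sum>j\<in>J. (c a j + c j a) * v j)" for v :: "'i \<Rightarrow> rat"
  define c' where "c' i j = c i j - (c a i + c i a) * (c a j + c j a) / (4 * d)" for i j
  have d0: "d > 0"
  proof -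
    have "0 < qf c (insert a J) (\<lambda>i. if i = a then 1 else 0)" by (rule posI) auto
    moreover have "qf c (insert a J) (\<lambda>i. if i = a then 1 else 0) = d"
      unfolding qf_def d_def using insert.hyps
      by (simp add: if_distrib[where f="\<lambda>x. _ * x"] sum.delta cong: if_cong)
    ultimately show ?thesis by simp
  qed
  have decomp: "qf c (insert a J) v = d * v a * v a + v a * L v + qf c J v" for v
  proof -
    have "qf c (insert a J) v = (\<Sum>j\<in>insert a J. c a j * v a * v j) + (\<Sum>i\<in>J. \<Sum>j\<in>insert a J. c i j * v i * v j)"
      unfolding qf_def using insert.hyps by simp
    also have "(\<Sum>j\<in>insert a J. c a j * v a * v j) = d * v a * v a + (\<Sum>j\<in>J. c a j * v a * v j)"
      using insert.hyps d_def by simp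
    also have "(\<Sum>i\<in>J. \<Sum>j\<in>insert a J. c i j * v i * v j) = (\<Sum>i\<in>J. c i a * v i * v a) + qf c J v"
      unfolding qf_def using insert.hyps by (simp add: sum.distrib)
    finally show ?thesis unfolding L_def
      by (simp add: sum_distrib_left sum.distrib algebra_simps)
  qed
  have Lsq: "(\<Sum>i\<in>J. \<Sum>j\<in>J. (c a i + c i a) * (c a j + c j a) * v i * v j) = L v * L v" for v
    unfolding L_def sum_product by (intro sum.cong refl) (simp add: algebra_simps)
  have qc': "qf c' J v = qf c J v - L v * L v / (4 * d)" for v
  proof -
    have "qf c' J v = (\<Sum>i\<in>J. \<Sum>j\<in>J. c i j * v i * v j - (c a i + c i a) * (c a j + c j a) * v i * v j / (4 * d))"
      unfolding qf_def c'_def by (intro sum.cong refl) (simp add: algebra_simps diff_divide_distrib)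
    also have "\<dots> = qf c J v - (\<Sum>i\<in>J. \<Sum>j\<in>J. (c a i + c i a) * (c a j + c j a) * v i * v j) / (4 * d)"
      unfolding qf_def by (simp add: sum_subtractf sum_divide_distrib)
    finally show ?thesis using Lsq by simp
  qed
  have sq: "qf c (insert a J) v = d * ((v a + L v / (2 * d)) * (v a + L v / (2 * d))) + qf c' J v" for v
    unfolding decomp qc' using d0 by (simp add: field_simps)
  have LJ: "L (v(a := x)) = L v" for v x unfolding L_def using insert.hyps by (intro sum.cong) auto
  have qJ: "qf c' J (v(a := x)) = qf c' J v" for v x by (rule qf_cong) (use insert.hyps in auto)
  have pos': "0 < qf c' J v" if "\<exists>i\<in>J. v i \<noteq> 0" for v
  proof -
    define w where "w = v(a := - L v / (2 * d))"
    have "0 < qf c (insert a J) w" using that insert.hyps by (intro posI) (auto simp: w_def)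
    moreover have "qf c (insert a J) w = qf c' J v"
      unfolding sq w_def LJ qJ using d0 by simp
    ultimately show ?thesis by simp
  qed
  have q'nn: "0 \<le> qf c' J v" for v
  proof (cases "\<exists>i\<in>J. v i \<noteq> 0")
    case True then show ?thesis using pos' by fastforce
  next
    case False
    then have "qf c' J v = qf c' J (\<lambda>_. 0)" by (intro qf_cong) auto
    then show ?thesis by (simp add: qf_def)
  qed
  define F where "F = {v :: 'i \<Rightarrow> int. (\<forall>i. i \<notin> J \<longrightarrow> v i = 0) \<and> qf c' J (\<lambda>i. of_int (v i)) \<le> B}"
  have finF: "finite F" unfolding F_def by (rule insert.IH) (rule pos')
  define M where "M = Max (insert 0 ((\<lambda>w. \<bar>L (\<lambda>i. of_int (w i))\<bar> / (2 * d)) ` F))"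
  define K where "K = \<lceil>B / d + 1 + M\<rceil>"
  have subs: "{v :: 'i \<Rightarrow> int. (\<forall>i. i \<notin> insert a J \<longrightarrow> v i = 0) \<and> qf c (insert a J) (\<lambda>i. of_int (v i)) \<le> B}
      \<subseteq> (\<lambda>(w, n). w(a := n)) ` (F \<times> {-K..K})"
  proof
    fix v :: "'i \<Rightarrow> int"
    assume "v \<in> {v. (\<forall>i. i \<notin> insert a J \<longrightarrow> v i = 0) \<and> qf c (insert a J) (\<lambda>i. of_int (v i)) \<le> B}"
    then have v0: "\<forall>i. i \<notin> insert a J \<longrightarrow> v i = 0" and vB: "qf c (insert a J) (\<lambda>i. of_int (v i)) \<le> B" by auto
    define v' where "v' = v(a := 0)"
    define r where "r = (\<lambda>i. rat_of_int (v i))"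
    have r': "(\<lambda>i. rat_of_int (v' i)) = r(a := 0)" unfolding v'_def r_def by auto
    have Lr: "L (\<lambda>i. rat_of_int (v' i)) = L r" unfolding r' LJ ..
    have qr: "qf c' J (\<lambda>i. rat_of_int (v' i)) = qf c' J r" unfolding r' qJ ..
    define t where "t = r a + L r / (2 * d)"
    have tt: "0 \<le> d * (t * t)" using d0 by simp
    have hB: "d * (t * t) + qf c' J r \<le> B" using vB sq[of r] unfolding t_def r_def by simp
    have v'F: "v' \<in> F" unfolding F_def using v0 hB tt qr by (auto simp: v'_def)
    have "t * t \<le> B / d" using hB q'nn[of r] d0 by (simp add: field_simps)
    then have "\<bar>t\<bar> \<le> B / d + 1" using abs_le_sq1[of t] by linarith
    moreover have "\<bar>L r\<bar> / (2 * d) \<le> M"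
    proof -
      have "\<bar>L (\<lambda>i. of_int (v' i))\<bar> / (2 * d) \<in> insert 0 ((\<lambda>w. \<bar>L (\<lambda>i. of_int (w i))\<bar> / (2 * d)) ` F)"
        using v'F by blast
      then show ?thesis unfolding M_def Lr using finF by (intro Max_ge) auto
    qed
    moreover have "\<bar>r a\<bar> \<le> \<bar>t\<bar> + \<bar>L r\<bar> / (2 * d)"
    proof -
      have e: "r a = t - L r / (2 * d)" unfolding t_def by simp
      have "\<bar>r a\<bar> \<le> \<bar>t\<bar> + \<bar>L r / (2 * d)\<bar>" unfolding e by (rule abs_triangle_ineq4)
      also have "\<bar>L r / (2 * d)\<bar> = \<bar>L r\<bar> / (2 * d)" using d0 by (simp add: abs_divide)
      finally show ?thesis .
    qed
    ultimately have "\<bar>r a\<bar> \<le> B / d + 1 + M" by linarith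
    then have "\<bar>r a\<bar> \<le> of_int K" unfolding K_def by (meson le_of_int_ceiling order_trans)
    then have "v a \<in> {-K..K}" unfolding r_def by (simp add: abs_le_iff)
    moreover have "v = v'(a := v a)" unfolding v'_def by simp
    ultimately have "(v', v a) \<in> F \<times> {-K..K} \<and> v = (\<lambda>(w, n). w(a := n)) (v', v a)" using v'F by simp
    then show "v \<in> (\<lambda>(w, n). w(a := n)) ` (F \<times> {-K..K})" by (intro image_eqI[where x="(v', v a)"]) auto
  qed
  show ?case by (rule finite_subset[OF subs]) (use finF in simp)
qed


lemma sumA_gen:
  fixes f :: "'i \<Rightarrow> 'i \<Rightarrow> 'a::comm_monoid_add"
  assumes "finite I" "A \<subseteq> I \<times> I"
  shows "(\<Sum>(s,t)\<in>A. f s t) = (\<Sum>i\<in>I. \<Sum>j\<in>I. if (i,j) \<in> A then f i j else 0)"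
proof -
  have "(\<Sum>i\<in>I. \<Sum>j\<in>I. if (i,j) \<in> A then f i j else 0) = (\<Sum>p\<in>I \<times> I. if p \<in> A then f (fst p) (snd p) else 0)"
    by (simp add: sum.cartesian_product split_def)
  also have "\<dots> = (\<Sum>p\<in>(I \<times> I) \<inter> A. f (fst p) (snd p))"
    using assms by (simp add: sum.inter_restrict)
  also have "(I \<times> I) \<inter> A = A" using assms by auto
  finally show ?thesis by (simp add: split_def)
qed

context dq
begin

definition Ns :: "('i \<Rightarrow> int) \<Rightarrow> 'i \<Rightarrow> int" where "Ns r i = (\<Sum>j\<in>nb i. r j)"
definition sig :: "'i set \<Rightarrow> ('i \<Rightarrow> int) \<Rightarrow> 'i \<Rightarrow> int" where
  "sig E r = (\<lambda>i. if i \<in> E then Ns r i - r i else r i)"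
definition cls :: "int \<Rightarrow> 'i set" where "cls q = {i \<in> I. (even q \<longleftrightarrow> par i)}"

lemma cls_V: "i \<in> cls q \<longleftrightarrow> (i, q) \<in> V" unfolding cls_def V_iff by simp
lemma cls_I: "cls q \<subseteq> I" unfolding cls_def by auto
lemma cls_suc: "i \<in> cls (q + 1) \<longleftrightarrow> i \<in> I \<and> i \<notin> cls q" unfolding cls_def by auto
lemma cls_2: "cls (q + 2) = cls q" "cls (q - 2) = cls q" "cls (q - 1) = cls (q + 1)"
  unfolding cls_def by (auto simp: even_add)
lemma cls_nbr: "i \<in> cls q \<Longrightarrow> j \<in> nb i \<Longrightarrow> j \<notin> cls q"
  using nbr_par[of j i] unfolding cls_def by auto

lemma sumA: "(\<Sum>(s,t)\<in>A. f s t) = (\<Sum>i\<in>I. \<Sum>j\<in>I. if (i,j) \<in> A then f i j else 0)"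
  by (rule sumA_gen[OF finI AI])

lemma sum_nb: "(\<Sum>j\<in>nb i. g j) = (\<Sum>j\<in>I. if (i,j) \<in> A then g j else 0) + (\<Sum>j\<in>I. if (j,i) \<in> A then g j else (0::int))"
proof -
  have e: "nb i = {j\<in>I. (i,j) \<in> A} \<union> {j\<in>I. (j,i) \<in> A}" unfolding nbr_def using AI by auto
  have d: "{j\<in>I. (i,j) \<in> A} \<inter> {j\<in>I. (j,i) \<in> A} = {}" using no_2cyc by auto
  have "(\<Sum>j\<in>nb i. g j) = (\<Sum>j\<in>{j\<in>I. (i,j) \<in> A}. g j) + (\<Sum>j\<in>{j\<in>I. (j,i) \<in> A}. g j)"
    unfolding e using d finI by (intro sum.union_disjoint) auto
  then show ?thesis using finI by (simp add: sum.inter_filter)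
qed

lemma QE: "(\<Sum>(s,t)\<in>A. r s * r t) = (\<Sum>i\<in>cls q. r i * Ns r i)"
proof -
  let ?E = "cls q"
  have ex: "(i,j) \<in> A \<Longrightarrow> (if i \<in> ?E then 1 else 0) + (if j \<in> ?E then 1 else 0) = (1::int)" for i j
    using alt'[of i j] AI unfolding cls_def by auto
  have "(\<Sum>(s,t)\<in>A. r s * r t) = (\<Sum>i\<in>I. \<Sum>j\<in>I. if (i,j) \<in> A then r i * r j else 0)" by (rule sumA)
  also have "\<dots> = (\<Sum>i\<in>I. \<Sum>j\<in>I. (if (i,j) \<in> A \<and> i \<in> ?E then r i * r j else 0) + (if (i,j) \<in> A \<and> j \<in> ?E then r i * r j else 0))"
  proof (intro sum.cong refl)
    fix i j assume "i \<in> I" "j \<in> I"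
    show "(if (i,j) \<in> A then r i * r j else 0) = (if (i,j) \<in> A \<and> i \<in> ?E then r i * r j else 0) + (if (i,j) \<in> A \<and> j \<in> ?E then r i * r j else 0)"
      using ex[of i j] by (cases "(i,j) \<in> A"; cases "i \<in> ?E"; cases "j \<in> ?E") auto
  qed
  also have "\<dots> = (\<Sum>i\<in>I. \<Sum>j\<in>I. if (i,j) \<in> A \<and> i \<in> ?E then r i * r j else 0) + (\<Sum>i\<in>I. \<Sum>j\<in>I. if (i,j) \<in> A \<and> j \<in> ?E then r i * r j else 0)"
    by (simp add: sum.distrib)
  also have "(\<Sum>i\<in>I. \<Sum>j\<in>I. if (i,j) \<in> A \<and> j \<in> ?E then r i * r j else 0) = (\<Sum>j\<in>I. \<Sum>i\<in>I. if (i,j) \<in> A \<and> j \<in> ?E then r i * r j else 0)"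
    by (rule sum.swap)
  also have "(\<Sum>i\<in>I. \<Sum>j\<in>I. if (i,j) \<in> A \<and> i \<in> ?E then r i * r j else 0) + (\<Sum>j\<in>I. \<Sum>i\<in>I. if (i,j) \<in> A \<and> j \<in> ?E then r i * r j else 0)
     = (\<Sum>i\<in>I. if i \<in> ?E then r i * Ns r i else 0)"
  proof -
    have "(\<Sum>i\<in>I. if i \<in> ?E then r i * Ns r i else 0) = (\<Sum>i\<in>I. (\<Sum>j\<in>I. if (i,j) \<in> A \<and> i \<in> ?E then r i * r j else 0) + (\<Sum>j\<in>I. if (j,i) \<in> A \<and> i \<in> ?E then r j * r i else 0))"
    proof (intro sum.cong refl)
      fix i assume "i \<in> I"
      show "(if i \<in> ?E then r i * Ns r i else 0) = (\<Sum>j\<in>I. if (i,j) \<in> A \<and> i \<in> ?E then r i * r j else 0) + (\<Sum>j\<in>I. if (j,i) \<in> A \<and> i \<in> ?E then r j * r i else 0)"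
      proof (cases "i \<in> ?E")
        case True
        have "r i * ((\<Sum>j\<in>I. if (i, j) \<in> A then r j else 0) + (\<Sum>j\<in>I. if (j, i) \<in> A then r j else 0))
          = (\<Sum>j\<in>I. r i * (if (i, j) \<in> A then r j else 0)) + (\<Sum>j\<in>I. r i * (if (j, i) \<in> A then r j else 0))"
          by (simp add: sum_distrib_left distrib_left)
        also have "\<dots> = (\<Sum>j\<in>I. if (i,j) \<in> A \<and> i \<in> ?E then r i * r j else 0) + (\<Sum>j\<in>I. if (j,i) \<in> A \<and> i \<in> ?E then r j * r i else 0)"
          using True by (intro arg_cong2[where f="(+)"] sum.cong refl) (auto simp: mult.commute)
        finally show ?thesis unfolding Ns_def sum_nb using True by simp
      qed simp
    qed
    then show ?thesis by (simp add: sum.distrib)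
  qed
  also have "\<dots> = (\<Sum>i\<in>?E. r i * Ns r i)" using cls_I finI by (simp add: sum.inter_restrict[symmetric] Int_absorb1)
  finally show ?thesis .
qed

lemma tits_E: "tits r = (\<Sum>i\<in>I. (r i)^2) - (\<Sum>i\<in>cls q. r i * Ns r i)"
  unfolding tits_form_def by (subst QE[of r q]) (rule refl)

lemma Ns_sig: assumes "i \<in> cls q" shows "Ns (sig (cls q) r) i = Ns r i"
  unfolding Ns_def
proof (rule sum.cong[OF refl])
  fix j assume "j \<in> nb i"
  then have "j \<notin> cls q" using cls_nbr[OF assms] by blast
  then show "sig (cls q) r j = r j" unfolding sig_def by simp
qed

lemma sig_invol: "sig (cls q) (sig (cls q) r) = r"
proof (rule ext)
  fix i show "sig (cls q) (sig (cls q) r) i = r i"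
  proof (cases "i \<in> cls q")
    case True
    have "sig (cls q) (sig (cls q) r) i = Ns (sig (cls q) r) i - sig (cls q) r i"
      using True unfolding sig_def[of "cls q" "sig (cls q) r"] by simp
    also have "\<dots> = Ns r i - (Ns r i - r i)"
    proof -
      have "sig (cls q) r i = Ns r i - r i" using True by (simp add: sig_def)
      then show ?thesis using Ns_sig[OF True, of r] by simp
    qed
    finally show ?thesis by simp
  next
    case False then show ?thesis unfolding sig_def by simp
  qed
qed

lemma sig_tits: "tits (sig (cls q) r) = tits r"
proof -
  let ?E = "cls q"
  have s1: "(\<Sum>i\<in>I. (sig ?E r i)^2) = (\<Sum>i\<in>I - ?E. (r i)^2) + (\<Sum>i\<in>?E. (Ns r i - r i)^2)"
  proof -
    have "(\<Sum>i\<in>I. (sig ?E r i)^2) = (\<Sum>i\<in>I - ?E. (sig ?E r i)^2) + (\<Sum>i\<in>?E. (sig ?E r i)^2)"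
      by (rule sum.subset_diff[OF cls_I finI])
    also have "(\<Sum>i\<in>I - ?E. (sig ?E r i)^2) = (\<Sum>i\<in>I - ?E. (r i)^2)"
      by (rule sum.cong) (auto simp: sig_def)
    also have "(\<Sum>i\<in>?E. (sig ?E r i)^2) = (\<Sum>i\<in>?E. (Ns r i - r i)^2)"
      by (rule sum.cong) (auto simp: sig_def)
    finally show ?thesis .
  qed
  have s2: "(\<Sum>i\<in>I. (r i)^2) = (\<Sum>i\<in>I - ?E. (r i)^2) + (\<Sum>i\<in>?E. (r i)^2)"
    by (rule sum.subset_diff[OF cls_I finI])
  have s3: "(\<Sum>i\<in>?E. sig ?E r i * Ns (sig ?E r) i) = (\<Sum>i\<in>?E. (Ns r i - r i) * Ns r i)"
  proof (rule sum.cong[OF refl])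
    fix i assume i: "i \<in> ?E"
    show "sig ?E r i * Ns (sig ?E r) i = (Ns r i - r i) * Ns r i"
      unfolding Ns_sig[OF i] using i by (simp add: sig_def)
  qed
  have s4: "(\<Sum>i\<in>?E. (Ns r i - r i)^2) - (\<Sum>i\<in>?E. (Ns r i - r i) * Ns r i) = (\<Sum>i\<in>?E. (r i)^2) - (\<Sum>i\<in>?E. r i * Ns r i)"
  proof -
    have "(Ns r i - r i)^2 - (Ns r i - r i) * Ns r i = (r i)^2 - r i * Ns r i" for i
      by (simp add: power2_eq_square algebra_simps)
    then show ?thesis by (simp add: sum_subtractf[symmetric])
  qed
  have "tits (sig ?E r) = (\<Sum>i\<in>I. (sig ?E r i)^2) - (\<Sum>i\<in>?E. sig ?E r i * Ns (sig ?E r) i)" by (rule tits_E)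
  also have "\<dots> = (\<Sum>i\<in>I - ?E. (r i)^2) + ((\<Sum>i\<in>?E. (Ns r i - r i)^2) - (\<Sum>i\<in>?E. (Ns r i - r i) * Ns r i))"
    unfolding s1 s3 by simp
  also have "\<dots> = (\<Sum>i\<in>I - ?E. (r i)^2) + ((\<Sum>i\<in>?E. (r i)^2) - (\<Sum>i\<in>?E. r i * Ns r i))" unfolding s4 ..
  also have "\<dots> = tits r" unfolding tits_E[of r q] s2 by simp
  finally show ?thesis .
qed

lemma sig_lin: "sig E (\<lambda>i. \<Sum>t\<in>T. f t i) = (\<lambda>i. \<Sum>t\<in>T. sig E (f t) i)"
  unfolding sig_def Ns_def by (rule ext) (auto simp: sum.swap[of _ T] sum_subtractf)

lemma sig_off: "(\<And>i. i \<notin> I \<Longrightarrow> r i = 0) \<Longrightarrow> i \<notin> I \<Longrightarrow> sig (cls q) r i = 0"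
  unfolding sig_def using cls_I by auto

lemma sign_coh:
  assumes t: "tits v = 1" and off: "\<And>i. i \<notin> I \<Longrightarrow> v i = 0"
  shows "(\<forall>i. v i \<ge> 0) \<or> (\<forall>i. v i \<le> 0)"
proof -
  define a where "a i = max (v i) 0" for i
  define b where "b i = max (- v i) 0" for i
  have vab: "v i = a i - b i" for i unfolding a_def b_def by auto
  have ab0: "a i * b i = 0" for i unfolding a_def b_def by auto
  have an: "a i \<ge> 0" "b i \<ge> 0" for i unfolding a_def b_def by auto
  have e1: "(\<Sum>i\<in>I. (v i)^2) = (\<Sum>i\<in>I. (a i)^2) + (\<Sum>i\<in>I. (b i)^2)"
  proof -
    have "(v i)^2 = (a i)^2 + (b i)^2" for i using ab0[of i] unfolding vab power2_eq_square by (simp add: algebra_simps)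
    then show ?thesis by (simp add: sum.distrib)
  qed
  have e2: "(\<Sum>(s,t)\<in>A. v s * v t) = (\<Sum>(s,t)\<in>A. a s * a t) + (\<Sum>(s,t)\<in>A. b s * b t) - (\<Sum>(s,t)\<in>A. a s * b t + b s * a t)"
  proof -
    have "(\<Sum>(s,t)\<in>A. v s * v t) = (\<Sum>(s,t)\<in>A. a s * a t + b s * b t - (a s * b t + b s * a t))"
      by (intro sum.cong refl) (auto simp: vab algebra_simps)
    also have "\<dots> = (\<Sum>(s,t)\<in>A. a s * a t) + (\<Sum>(s,t)\<in>A. b s * b t) - (\<Sum>(s,t)\<in>A. a s * b t + b s * a t)"
      by (simp add: sum_subtractf sum.distrib split_def)
    finally show ?thesis .
  qed
  have cross: "(\<Sum>(s,t)\<in>A. a s * b t + b s * a t) \<ge> 0" using an by (intro sum_nonneg) auto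
  have tv: "tits v \<ge> tits a + tits b" unfolding tits_form_def e1 e2 using cross by simp
  show ?thesis
  proof (rule ccontr)
    assume "\<not> ?thesis"
    then obtain i j where "v i < 0" "v j > 0" by (auto simp: not_le)
    then have "i \<in> I" "j \<in> I" "b i \<noteq> 0" "a j \<noteq> 0" using off unfolding a_def b_def by fastforce+
    then have "tits a \<ge> 1" "tits b \<ge> 1" using tits_pos_ge1 by blast+
    then show False using tv t by simp
  qed
qed

lemma unit_root:
  assumes nn: "\<And>i. r i \<ge> 0" and off: "\<And>i. i \<notin> I \<Longrightarrow> r i = 0" and t: "tits r = 1"
    and neg: "\<And>i. sig (cls q) r i \<le> 0"
  shows "\<exists>w\<in>cls q. r = (\<lambda>i. if i = w then 1 else 0)"
proof -
  let ?E = "cls q"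
  have z1: "r i = 0" if "i \<notin> ?E" for i using neg[of i] nn[of i] that by (simp add: sig_def)
  have z2: "Ns r i = 0" if "i \<in> ?E" for i unfolding Ns_def using cls_nbr[OF that] z1 by simp
  have "tits r = (\<Sum>i\<in>I. (r i)^2)" unfolding tits_E[of _ q] using z2 by simp
  then have sq: "(\<Sum>i\<in>I. (r i)^2) = 1" using t by simp
  obtain w where w: "w \<in> I" "r w \<noteq> 0"
  proof (rule ccontr)
    assume "\<not> thesis"
    then have "\<forall>i\<in>I. r i = 0" using that by blast
    then show False using sq by simp
  qed
  have wE: "w \<in> ?E" using w z1 by blast
  have "(\<Sum>i\<in>I. (r i)^2) = (r w)^2 + (\<Sum>i\<in>I - {w}. (r i)^2)" using w finI by (simp add: sum.remove)
  moreover have "(r w)^2 \<ge> 1" using w nn[of w] by (smt (verit) one_le_power)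
  moreover have "(\<Sum>i\<in>I - {w}. (r i)^2) \<ge> 0" by (intro sum_nonneg) auto
  ultimately have a: "(r w)^2 = 1" and b: "(\<Sum>i\<in>I - {w}. (r i)^2) = 0" using sq by linarith+
  have "r w = 1" using a nn[of w] by (smt (verit) power2_eq_1_iff)
  moreover have "r i = 0" if "i \<noteq> w" for i
  proof (cases "i \<in> I")
    case True
    then have "(r i)^2 = 0" using b finI that sum_nonneg_eq_0_iff[of "I - {w}" "\<lambda>i. (r i)^2"] by auto
    then show ?thesis by simp
  next
    case False then show ?thesis using off by simp
  qed
  ultimately show ?thesis using wE by (intro bexI[of _ w]) auto
qed

definition cq :: "'i \<Rightarrow> 'i \<Rightarrow> rat" where
  "cq i j = (if i = j then 1 else 0) - (if (i,j) \<in> A then 1 else 0)"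

lemma tits_qf: "rat_of_int (tits v) = qf cq I (\<lambda>i. rat_of_int (v i))"
proof -
  have "qf cq I (\<lambda>i. rat_of_int (v i)) = (\<Sum>i\<in>I. \<Sum>j\<in>I. (if i = j then of_int (v i) * of_int (v j) else 0) - (if (i,j) \<in> A then of_int (v i) * of_int (v j) else 0))"
    unfolding qf_def cq_def by (intro sum.cong refl) (auto simp: algebra_simps)
  also have "\<dots> = (\<Sum>i\<in>I. (of_int (v i))^2) - (\<Sum>i\<in>I. \<Sum>j\<in>I. (if (i,j) \<in> A then of_int (v i) * of_int (v j) else 0))"
    using finI by (simp add: sum_subtractf sum.delta power2_eq_square)
  also have "(\<Sum>i\<in>I. \<Sum>j\<in>I. (if (i,j) \<in> A then rat_of_int (v i) * of_int (v j) else 0)) = (\<Sum>(s,t)\<in>A. of_int (v s) * of_int (v t))"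
    by (rule sumA_gen[OF finI AI, symmetric])
  finally show ?thesis unfolding tits_form_def by (simp add: of_int_sum split_def)
qed

lemma qf_scale: "qf c I (\<lambda>i. x * v i) = x * x * qf c I v"
  unfolding qf_def by (simp add: sum_distrib_left algebra_simps)

lemma pos_rat:
  fixes v :: "'i \<Rightarrow> rat"
  assumes "\<exists>i\<in>I. v i \<noteq> 0"
  shows "0 < qf cq I v"
proof -
  define n where "n i = fst (quotient_of (v i))" for i
  define d where "d i = snd (quotient_of (v i))" for i
  have vd: "v i = of_int (n i) / of_int (d i)" for i
    unfolding n_def d_def by (rule quotient_of_div) simp
  have dpos: "d i > 0" for i unfolding d_def by (rule quotient_of_denom_pos')
  define D where "D = (\<Prod>i\<in>I. d i)"
  have Dpos: "D > 0" unfolding D_def using dpos by (simp add: prod_pos)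
  define w where "w i = (if i \<in> I then n i * (\<Prod>j\<in>I - {i}. d j) else 0)" for i
  have wv: "rat_of_int (w i) = of_int D * v i" if "i \<in> I" for i
  proof -
    have "D = d i * (\<Prod>j\<in>I - {i}. d j)" unfolding D_def using that finI by (simp add: prod.remove)
    then show ?thesis unfolding w_def vd using that dpos[of i] by (simp add: field_simps)
  qed
  obtain i0 where i0: "i0 \<in> I" "v i0 \<noteq> 0" using assms by blast
  have "w i0 \<noteq> 0"
  proof
    assume "w i0 = 0"
    then have "of_int D * v i0 = 0" using wv[OF i0(1)] by simp
    then show False using Dpos i0 by simp
  qed
  then have "tits w > 0" using i0 by (intro pos) auto
  then have "0 < qf cq I (\<lambda>i. rat_of_int (w i))" using tits_qf[of w] by linarith
  also have "qf cq I (\<lambda>i. rat_of_int (w i)) = qf cq I (\<lambda>i. of_int D * v i)" by (rule qf_cong) (simp add: wv)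
  also have "\<dots> = of_int D * of_int D * qf cq I v" by (rule qf_scale)
  finally show ?thesis using Dpos by (simp add: zero_less_mult_iff)
qed

lemma roots_finite: "finite {v. (\<forall>i. 0 \<le> v i) \<and> (\<forall>i. i \<notin> I \<longrightarrow> v i = 0) \<and> tits v = 1}"
proof -
  have "finite {v :: 'i \<Rightarrow> int. (\<forall>i. i \<notin> I \<longrightarrow> v i = 0) \<and> qf cq I (\<lambda>i. of_int (v i)) \<le> 1}"
    by (rule form_finite[OF finI pos_rat])
  moreover have "{v. (\<forall>i. 0 \<le> v i) \<and> (\<forall>i. i \<notin> I \<longrightarrow> v i = 0) \<and> tits v = 1}
     \<subseteq> {v :: 'i \<Rightarrow> int. (\<forall>i. i \<notin> I \<longrightarrow> v i = 0) \<and> qf cq I (\<lambda>i. of_int (v i)) \<le> 1}"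
    using tits_qf by (auto simp flip: tits_qf)
  ultimately show ?thesis using finite_subset by blast
qed

end

definition idc :: "int \<Rightarrow> int" where "idc x = x"
lemma idc0[simp]: "idc 0 = 0" by (simp add: idc_def)

context dq
begin

abbreviation "HH \<equiv> hg (max 0)"
abbreviation "UU \<equiv> hg idc"

lemma HC: "z \<in> V \<Longrightarrow> HH z v = (if v \<notin> V \<or> snd v < snd z then 0 else if v = z then 1
            else max 0 ((\<Sum>w\<in>preds v. HH z w) - HH z (tau v)))"
  by (rule GC) simp
lemma UC: "z \<in> V \<Longrightarrow> UU z v = (if v \<notin> V \<or> snd v < snd z then 0 else if v = z then 1
            else (\<Sum>w\<in>preds v. UU z w) - UU z (tau v))"
  using GC[where cl=idc] by (simp add: idc_def)

lemma HH_nn: "z \<in> V \<Longrightarrow> HH z v \<ge> 0" using HC[of z v] by auto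
lemma HH_nonV: "z \<in> V \<Longrightarrow> v \<notin> V \<Longrightarrow> HH z v = 0" using HC by simp
lemma UU_nonV: "z \<in> V \<Longrightarrow> v \<notin> V \<Longrightarrow> UU z v = 0" using UC by simp

lemma U_tilde:
  assumes z: "z \<in> V" and v: "v \<in> V"
  shows "UU z v + UU z (tau v) - (\<Sum>w\<in>preds v. UU z w) = (if v = z then 1 else 0)"
proof -
  have low: "(\<Sum>w\<in>preds v. UU z w) = 0" if "snd v \<le> snd z" 
  proof (rule sum.neutral, intro ballI)
    fix w assume "w \<in> preds v"
    then have "snd w < snd z" using preds_layer[of w v] that by simp
    then show "UU z w = 0" by (rule homg_low)
  qed
  show ?thesis
  proof (cases "snd v < snd z")
    case True then show ?thesis using low homg_low[of v z] homg_low[of "tau v" z] by auto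
  next
    case False
    show ?thesis
    proof (cases "v = z")
      case True then show ?thesis using low homg_self[of idc z] homg_low[of "tau v" z] z by simp
    next
      case False
      then show ?thesis using UC[OF z, of v] v \<open>\<not> snd v < snd z\<close> by simp
    qed
  qed
qed

definition rho :: "'i \<times> int \<Rightarrow> int \<Rightarrow> 'i \<Rightarrow> int" where
  "rho z q = (\<lambda>i. UU z (i, q) + UU z (i, q + 1))"

lemma U_cls: "z \<in> V \<Longrightarrow> UU z (i, q) \<noteq> 0 \<Longrightarrow> i \<in> cls q"
  using UU_nonV cls_V by blast

lemma rho_off: "z \<in> V \<Longrightarrow> i \<notin> I \<Longrightarrow> rho z q i = 0"
  unfolding rho_def using UU_nonV V_iff by auto

lemma rho_step:
  assumes z: "z \<in> V" and q: "q \<ge> snd z - 1"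
  shows "rho z (q + 1) = sig (cls q) (rho z q)"
proof (rule ext)
  fix i
  show "rho z (q + 1) i = sig (cls q) (rho z q) i"
  proof (cases "i \<in> cls q")
    case True
    have v2: "(i, q + 2) \<in> V" using True cls_V cls_2 by metis
    have v1: "(i, q + 1) \<notin> V" using True cls_V cls_suc by blast
    have ne: "(i, q + 2) \<noteq> z" using q by auto
    have "UU z (i, q + 2) = (\<Sum>w\<in>preds (i, q + 2). UU z w) - UU z (i, q)"
      using UC[OF z, of "(i, q+2)"] v2 ne q by (simp add: tau_def)
    also have "(\<Sum>w\<in>preds (i, q + 2). UU z w) = (\<Sum>j\<in>nb i. UU z (j, q + 1))"
      using sum_preds[OF v2, of "UU z"] by (simp add: add.commute)
    finally have e2: "UU z (i, q + 2) = (\<Sum>j\<in>nb i. UU z (j, q + 1)) - UU z (i, q)" .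
    have e1: "UU z (i, q + 1) = 0" using UU_nonV[OF z v1] .
    have ns: "Ns (rho z q) i = (\<Sum>j\<in>nb i. UU z (j, q + 1))"
      unfolding Ns_def rho_def
    proof (rule sum.cong[OF refl])
      fix j assume "j \<in> nb i"
      then have "(j, q) \<notin> V" using cls_nbr[OF True] cls_V by blast
      then show "UU z (j, q) + UU z (j, q + 1) = UU z (j, q + 1)" using UU_nonV[OF z] by simp
    qed
    show ?thesis using True unfolding sig_def ns unfolding rho_def using e1 e2 by (simp add: add.assoc)
  next
    case False
    have "(i, q + 2) \<notin> V" using False cls_V cls_2 by metis
    then have "UU z (i, q + 2) = 0" using UU_nonV[OF z] by simp
    moreover have "UU z (i, q) = 0" using False cls_V UU_nonV[OF z] by blast
    ultimately show ?thesis using False unfolding sig_def rho_def by (simp add: add.assoc)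
  qed
qed

lemma rho_init: "z \<in> V \<Longrightarrow> rho z (snd z - 1) = (\<lambda>i. if i = fst z then 1 else 0)"
proof (rule ext)
  fix i assume z: "z \<in> V"
  have "UU z (i, snd z - 1) = 0" by (rule homg_low) simp
  moreover have "UU z (i, snd z) = (if i = fst z then 1 else 0)"
    using homg_same_layer[of idc z "(i, snd z)"] z by (cases z) auto
  ultimately show "rho z (snd z - 1) i = (if i = fst z then 1 else 0)" unfolding rho_def by simp
qed

lemma rho_tits: assumes z: "z \<in> V" shows "q \<ge> snd z - 1 \<Longrightarrow> tits (rho z q) = 1"
proof (induction q rule: int_ge_induct)
  case base
  have "fst z \<in> I" using z V_iff' by blast
  then show ?case using rho_init[OF z] tits_unit[OF finA _ finI] no_loop by simp
next
  case (step q)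
  then show ?case using rho_step[OF z step(1)] sig_tits by simp
qed

lemma rho_back: "z \<in> V \<Longrightarrow> q \<ge> snd z - 1 \<Longrightarrow> rho z q = sig (cls q) (rho z (q + 1))"
  using rho_step sig_invol by metis

lemma cls_per: "cls (q + 2 * k) = cls q" unfolding cls_def by (auto simp: even_add)

lemma rho_nonneg_fails:
  assumes z: "z \<in> V"
  shows "\<exists>q \<ge> snd z - 1. \<not> (\<forall>i. rho z q i \<ge> 0)"
proof (rule ccontr)
  assume "\<not> ?thesis"
  then have nn: "\<And>q i. q \<ge> snd z - 1 \<Longrightarrow> rho z q i \<ge> 0" by auto
  define q0 where "q0 = snd z - 1"
  define f where "f n = rho z (q0 + 2 * int n)" for n :: nat
  have fR: "f n \<in> {v. (\<forall>i. 0 \<le> v i) \<and> (\<forall>i. i \<notin> I \<longrightarrow> v i = 0) \<and> tits v = 1}" for n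
    unfolding f_def q0_def using nn rho_off[OF z] rho_tits[OF z] by auto
  have "\<not> inj f"
  proof
    assume "inj f"
    moreover have "finite (range f)" using roots_finite fR by (meson finite_subset image_subsetI)
    ultimately have "finite (UNIV :: nat set)" using finite_imageD by blast
    then show False by simp
  qed
  then obtain n1 n2 where n12: "n1 < n2" "f n1 = f n2"
    unfolding inj_def by (metis linorder_neqE_nat)
  define D where "D = n2 - n1"
  have D0: "D > 0" using n12 D_def by simp
  have bk: "s \<le> 2 * n1 \<Longrightarrow> rho z (q0 + 2 * int n1 - int s) = rho z (q0 + 2 * int n2 - int s)" for s
  proof (induction s)
    case 0 then show ?case using n12 f_def by simp
  next
    case (Suc s)
    define a where "a = q0 + 2 * int n1 - int (Suc s)"
    have a0: "a \<ge> snd z - 1" using Suc.prems unfolding a_def q0_def by simp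
    have b: "q0 + 2 * int n2 - int (Suc s) = a + 2 * int D" unfolding a_def D_def using n12 by simp
    have "rho z a = sig (cls a) (rho z (a + 1))" using rho_back[OF z a0] .
    moreover have "rho z (a + 2 * int D) = sig (cls a) (rho z (a + 2 * int D + 1))"
      using rho_back[OF z, of "a + 2 * int D"] a0 cls_per[of a "int D"] by simp
    moreover have "rho z (a + 1) = rho z (a + 2 * int D + 1)"
      using Suc.IH Suc.prems unfolding a_def D_def using n12 by (simp add: algebra_simps)
    ultimately show ?case unfolding b a_def[symmetric] by simp
  qed
  have per0: "rho z q0 = rho z (q0 + 2 * int D)"
  proof -
    have "q0 + 2 * int D = q0 + 2 * int n2 - int (2 * n1)" unfolding D_def using n12 by (simp add: of_nat_diff)
    then show ?thesis using bk[of "2 * n1"] by (simp add: add_diff_eq)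
  qed
  have per: "rho z (q0 + int m) = rho z (q0 + 2 * int D + int m)" for m
  proof (induction m)
    case 0 then show ?case using per0 by simp
  next
    case (Suc m)
    have a0: "q0 + int m \<ge> snd z - 1" unfolding q0_def by simp
    have "rho z (q0 + int (Suc m)) = sig (cls (q0 + int m)) (rho z (q0 + int m))"
      using rho_step[OF z a0] by (simp add: algebra_simps)
    also have "\<dots> = sig (cls (q0 + 2 * int D + int m)) (rho z (q0 + 2 * int D + int m))"
      using Suc.IH cls_per[of "q0 + int m" "int D"] by (simp add: algebra_simps)
    also have "\<dots> = rho z (q0 + 2 * int D + int m + 1)"
      using rho_step[OF z, of "q0 + 2 * int D + int m"] unfolding q0_def by simp
    finally show ?case by (simp add: algebra_simps)
  qed
  define E0 where "E0 = cls q0"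
  define E1 where "E1 = cls (q0 + 1)"
  define G where "G = (\<lambda>i. \<Sum>t<D. rho z (q0 + 2 * int t) i)"
  have s0: "sig E0 G = (\<lambda>i. \<Sum>t<D. rho z (q0 + 2 * int t + 1) i)"
  proof -
    have "sig E0 G = (\<lambda>i. \<Sum>t<D. sig E0 (rho z (q0 + 2 * int t)) i)" unfolding G_def by (rule sig_lin)
    also have "\<dots> = (\<lambda>i. \<Sum>t<D. rho z (q0 + 2 * int t + 1) i)"
    proof (intro ext sum.cong refl)
      fix i t
      have "E0 = cls (q0 + 2 * int t)" unfolding E0_def using cls_per[of q0 "int t"] by simp
      then show "sig E0 (rho z (q0 + 2 * int t)) i = rho z (q0 + 2 * int t + 1) i"
        using rho_step[OF z, of "q0 + 2 * int t"] unfolding q0_def by simp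
    qed
    finally show ?thesis .
  qed
  have s1: "sig E1 (sig E0 G) = G"
  proof -
    have "sig E1 (sig E0 G) = (\<lambda>i. \<Sum>t<D. sig E1 (rho z (q0 + 2 * int t + 1)) i)" unfolding s0 by (rule sig_lin)
    also have "\<dots> = (\<lambda>i. \<Sum>t<D. rho z (q0 + 2 * int (Suc t)) i)"
    proof (intro ext sum.cong refl)
      fix i t
      have "E1 = cls (q0 + 2 * int t + 1)" unfolding E1_def using cls_per[of "q0 + 1" "int t"] by (simp add: algebra_simps)
      then show "sig E1 (rho z (q0 + 2 * int t + 1)) i = rho z (q0 + 2 * int (Suc t)) i"
        using rho_step[OF z, of "q0 + 2 * int t + 1"] unfolding q0_def by (simp add: algebra_simps)
    qed
    also have "\<dots> = G"
    proof (rule ext)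
      fix i
      have "(\<Sum>t<D. rho z (q0 + 2 * int (Suc t)) i) + rho z (q0 + 2 * int 0) i = (\<Sum>t<Suc D. rho z (q0 + 2 * int t) i)"
        by (simp only: sum.lessThan_Suc_shift)
      also have "\<dots> = (\<Sum>t<D. rho z (q0 + 2 * int t) i) + rho z (q0 + 2 * int D) i" by simp
      finally show "(\<Sum>t<D. rho z (q0 + 2 * int (Suc t)) i) = G i" unfolding G_def using per0 by simp
    qed
    finally show ?thesis .
  qed
  have eqs: "sig E0 G = sig E1 G" using arg_cong[OF s1, of "sig E1"] unfolding E1_def sig_invol by simp
  have NsG: "Ns G i = 2 * G i" if "i \<in> I" for i
  proof (cases "i \<in> E0")
    case True
    then have "i \<notin> E1" unfolding E0_def E1_def using cls_suc by blast
    then show ?thesis using fun_cong[OF eqs, of i] True unfolding sig_def by simp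
  next
    case False
    then have "i \<in> E1" unfolding E0_def E1_def using cls_suc that by blast
    then show ?thesis using fun_cong[OF eqs, of i] False unfolding sig_def by simp
  qed
  have t0: "tits G = (\<Sum>i\<in>I. (G i)^2) - 2 * (\<Sum>i\<in>E0. (G i)^2)"
    unfolding tits_E[of G q0] E0_def[symmetric] using NsG cls_I[of q0] unfolding E0_def[symmetric]
    by (auto simp: sum_distrib_left power2_eq_square intro!: sum.cong)
  have t1: "tits G = (\<Sum>i\<in>I. (G i)^2) - 2 * (\<Sum>i\<in>E1. (G i)^2)"
    unfolding tits_E[of G "q0 + 1"] E1_def[symmetric] using NsG cls_I[of "q0+1"] unfolding E1_def[symmetric]
    by (auto simp: sum_distrib_left power2_eq_square intro!: sum.cong)
  have E01: "I - E0 = E1" unfolding E0_def E1_def using cls_suc cls_I by blast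
  have "(\<Sum>i\<in>I. (G i)^2) = (\<Sum>i\<in>I - E0. (G i)^2) + (\<Sum>i\<in>E0. (G i)^2)"
    by (rule sum.subset_diff) (use cls_I finI in \<open>auto simp: E0_def\<close>)
  then have "tits G = 0" using t0 t1 E01 by simp
  moreover have "G (fst z) \<ge> 1"
  proof -
    have "G (fst z) = rho z q0 (fst z) + (\<Sum>t\<in>{..<D} - {0}. rho z (q0 + 2 * int t) (fst z))"
      unfolding G_def using D0 by (subst sum.remove[of _ 0]) auto
    moreover have "rho z q0 (fst z) = 1" unfolding q0_def using rho_init[OF z] by simp
    moreover have "(\<Sum>t\<in>{..<D} - {0}. rho z (q0 + 2 * int t) (fst z)) \<ge> 0"
      using nn unfolding q0_def by (intro sum_nonneg) auto
    ultimately show ?thesis by simp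
  qed
  moreover have "fst z \<in> I" using z V_iff' by blast
  ultimately show False using pos[of G] by force
qed

end

context dq
begin

lemma dynkin_end:
  assumes z: "z \<in> V"
  shows "\<exists>n. n \<in> V \<and> snd n \<ge> snd z + 2 \<and> (\<forall>v. HH z v = UU z v + UU n v)
            \<and> (\<forall>v. snd v \<ge> snd n - 1 \<longrightarrow> HH z v = 0)"
proof -
  define q0 where "q0 = snd z - 1"
  define S where "S = {k::nat. \<not> (\<forall>i. rho z (q0 + int k) i \<ge> 0)}"
  have Sne: "\<exists>k. k \<in> S"
  proof -
    obtain q where q: "q \<ge> snd z - 1" "\<not> (\<forall>i. rho z q i \<ge> 0)" using rho_nonneg_fails[OF z] by blast
    then have "nat (q - q0) \<in> S" unfolding S_def q0_def by simp
    then show ?thesis by blast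
  qed
  define k1 where "k1 = (LEAST k. k \<in> S)"
  have k1S: "k1 \<in> S" unfolding k1_def using Sne by (metis LeastI)
  have belowS: "k < k1 \<Longrightarrow> \<forall>i. rho z (q0 + int k) i \<ge> 0" for k
  proof -
    assume "k < k1"
    then have "k \<notin> S" using not_less_Least[of k "\<lambda>k. k \<in> S"] unfolding k1_def by blast
    then show ?thesis unfolding S_def by simp
  qed
  have fz: "fst z \<in> cls (snd z)" using z cls_V by (cases z) auto
  have k10: "k1 \<noteq> 0"
  proof
    assume "k1 = 0"
    then show False using k1S rho_init[OF z] unfolding S_def q0_def by (auto split: if_splits)
  qed
  define q1 where "q1 = q0 + int k1"
  have q1a: "q1 - 1 \<ge> snd z - 1" unfolding q1_def q0_def using k10 by simp
  have rnn: "\<forall>i. rho z (q1 - 1) i \<ge> 0"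
    using belowS[of "k1 - 1"] k10 unfolding q1_def by (simp add: of_nat_diff algebra_simps)
  have rstep: "rho z q1 = sig (cls (q1 - 1)) (rho z (q1 - 1))"
    using rho_step[OF z q1a] by simp
  have nonpos: "\<forall>i. rho z q1 i \<le> 0"
  proof -
    have "tits (rho z q1) = 1" using rho_tits[OF z] q1a by simp
    then have "(\<forall>i. rho z q1 i \<ge> 0) \<or> (\<forall>i. rho z q1 i \<le> 0)" using sign_coh rho_off[OF z] by blast
    moreover have "\<not> (\<forall>i. rho z q1 i \<ge> 0)" using k1S unfolding S_def q1_def by simp
    ultimately show ?thesis by blast
  qed
  obtain w where wE: "w \<in> cls (q1 - 1)" and rw: "rho z (q1 - 1) = (\<lambda>i. if i = w then 1 else 0)"
    using unit_root[of "rho z (q1 - 1)" "q1 - 1"] rnn rho_off[OF z] rho_tits[OF z q1a] nonpos rstep by auto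
  have k11: "k1 \<noteq> 1"
  proof
    assume "k1 = 1"
    then have "q1 - 1 = snd z - 1" unfolding q1_def q0_def by simp
    then have "rho z (q1 - 1) = (\<lambda>i. if i = fst z then 1 else 0)" using rho_init[OF z] by simp
    then have "w = fst z" using rw by (metis one_neq_zero)
    then have "fst z \<in> cls (snd z - 1)" using wE \<open>q1 - 1 = snd z - 1\<close> by simp
    then show False using fz cls_suc[of "fst z" "snd z - 1"] by simp
  qed
  have q1z: "q1 \<ge> snd z + 1" unfolding q1_def q0_def using k10 k11 by simp
  define n where "n = (w, q1 + 1)"
  have nV: "n \<in> V" unfolding n_def using wE cls_V cls_2(3) by metis
  have sn: "snd n = q1 + 1" unfolding n_def by simp
  have L1: "UU z (i, q1 - 1) = (if i = w then 1 else 0) \<and> UU z (i, q1) = 0" for i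
  proof -
    have r: "UU z (i, q1 - 1) + UU z (i, q1) = (if i = w then 1 else 0)"
      using fun_cong[OF rw, of i] unfolding rho_def by simp
    have one: "UU z (i, q1 - 1) = 0 \<or> UU z (i, q1) = 0"
      using U_cls[OF z, of i "q1 - 1"] U_cls[OF z, of i q1] cls_suc[of i "q1 - 1"] by auto
    show ?thesis
    proof (cases "i = w")
      case True
      then have "UU z (i, q1) = 0" using U_cls[OF z, of i q1] wE cls_suc[of i "q1 - 1"] by auto
      then show ?thesis using r True by simp
    next
      case False then show ?thesis using r one by auto
    qed
  qed
  have L2: "UU z (i, q1 + 1) = (if i = w then -1 else 0)" for i
  proof -
    have "rho z q1 i = sig (cls (q1 - 1)) (\<lambda>i. if i = w then 1 else 0) i" using rstep rw by simp
    also have "\<dots> = (if i = w then -1 else 0)"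
    proof (cases "i \<in> cls (q1 - 1)")
      case True
      have "w \<notin> nb i" using cls_nbr[OF True] wE by blast
      then have "Ns (\<lambda>i. if i = w then 1 else 0) i = 0" unfolding Ns_def using nbr_fin by simp
      then show ?thesis using True unfolding sig_def by simp
    next
      case False then show ?thesis using wE unfolding sig_def by auto
    qed
    finally show ?thesis using L1[of i] unfolding rho_def by simp
  qed
  have Lnn: "UU z v \<ge> 0" if "snd v \<le> q1" for v
  proof (cases "snd v < snd z")
    case True then show ?thesis using homg_low by simp
  next
    case False
    define k where "k = nat (snd v - 1 - q0)"
    have kk: "k < k1" "q0 + int k = snd v - 1" unfolding k_def q0_def using that False q1_def q0_def by auto
    have r: "rho z (snd v - 1) (fst v) \<ge> 0" using belowS[OF kk(1)] kk(2) by simp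
    have "UU z (fst v, snd v - 1) = 0 \<or> UU z (fst v, snd v) = 0"
      using U_cls[OF z, of "fst v" "snd v - 1"] U_cls[OF z, of "fst v" "snd v"] cls_suc[of "fst v" "snd v - 1"] by auto
    then show ?thesis using r unfolding rho_def by (cases v) auto
  qed
  have HU: "HH z v = UU z v" if "snd v \<le> q1" for v
    using that
  proof (induction v rule: layer_induct[where L="snd z"])
    case (1 v) then show ?case using homg_low by simp
  next
    case (2 v)
    show ?case
    proof (cases "v \<notin> V \<or> v = z")
      case True then show ?thesis using HC[OF z, of v] UC[OF z, of v] by auto
    next
      case False
      have "(\<Sum>w\<in>preds v. HH z w) = (\<Sum>w\<in>preds v. UU z w)"
        by (rule sum.cong[OF refl]) (use 2 preds_layer in fastforce)
      moreover have "HH z (tau v) = UU z (tau v)" using 2 by simp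
      moreover have "UU z v \<ge> 0" using Lnn 2 by simp
      ultimately show ?thesis using HC[OF z, of v] UC[OF z, of v] False 2 by simp
    qed
  qed
  have H0: "HH z v = 0" if "snd v \<ge> q1" for v
    using that
  proof (induction v rule: layer_induct[where L="q1 + 1"])
    case (1 v)
    then have "snd v = q1" by simp
    then have "HH z v = UU z v" using HU by simp
    also have "\<dots> = 0" using L1[of "fst v"] \<open>snd v = q1\<close> by (cases v) auto
    finally show ?case .
  next
    case (2 v)
    show ?case
    proof (cases "v \<in> V")
      case False then show ?thesis using HH_nonV[OF z] by simp
    next
      case True
      have vz: "v \<noteq> z" using 2 q1z by auto
      have "(\<Sum>w\<in>preds v. HH z w) = 0"
        by (rule sum.neutral) (use 2 preds_layer in fastforce)
      then show ?thesis using HC[OF z, of v] True vz HH_nn[OF z, of "tau v"] by simp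
    qed
  qed
  have Z: "UU z v + UU n v = 0" if "snd v \<ge> q1" for v
    using that
  proof (induction v rule: layer_induct[where L="q1 + 2"])
    case (1 v)
    show ?case
    proof (cases "snd v = q1")
      case True
      then show ?thesis using L1[of "fst v"] homg_low[of v n] sn by (cases v) auto
    next
      case False
      then have sv: "snd v = q1 + 1" using 1 by simp
      have "UU n v = (if v = n then 1 else 0)" using homg_same_layer[of idc n v] nV sv sn by simp
      moreover have "v = n \<longleftrightarrow> fst v = w" using sv unfolding n_def by (cases v) auto
      ultimately show ?thesis using L2[of "fst v"] sv by (cases v) auto
    qed
  next
    case (2 v)
    show ?case
    proof (cases "v \<in> V")
      case False then show ?thesis using UU_nonV[OF z] UU_nonV[OF nV] by simp
    next
      case True
      have vz: "v \<noteq> z" "v \<noteq> n" using 2 q1z sn by auto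
      have "(\<Sum>w\<in>preds v. UU z w) + (\<Sum>w\<in>preds v. UU n w) = (\<Sum>w\<in>preds v. UU z w + UU n w)"
        by (simp add: sum.distrib)
      also have "\<dots> = 0" by (rule sum.neutral) (use 2 preds_layer in fastforce)
      finally have "(\<Sum>w\<in>preds v. UU z w) + (\<Sum>w\<in>preds v. UU n w) = 0" .
      moreover have "UU z (tau v) + UU n (tau v) = 0" using 2 by simp
      moreover have "UU z v = (\<Sum>w\<in>preds v. UU z w) - UU z (tau v)"
        using UC[OF z, of v] True vz 2 q1z by simp
      moreover have "UU n v = (\<Sum>w\<in>preds v. UU n w) - UU n (tau v)"
        using UC[OF nV, of v] True vz 2 sn by simp
      ultimately show ?thesis by linarith
    qed
  qed
  have D1: "HH z v = UU z v + UU n v" for v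
  proof (cases "snd v \<le> q1")
    case True then show ?thesis using HU homg_low[of v n] sn by simp
  next
    case False then show ?thesis using H0 Z by simp
  qed
  show ?thesis
    by (intro exI[of _ n]) (use nV sn q1z D1 H0 in auto)
qed

definition NN :: "'i \<times> int \<Rightarrow> 'i \<times> int" where
  "NN z = (SOME n. n \<in> V \<and> snd n \<ge> snd z + 2 \<and> (\<forall>v. HH z v = UU z v + UU n v)
            \<and> (\<forall>v. snd v \<ge> snd n - 1 \<longrightarrow> HH z v = 0))"

lemma NN_props:
  assumes "z \<in> V"
  shows "NN z \<in> V" "snd (NN z) \<ge> snd z + 2" "\<And>v. HH z v = UU z v + UU (NN z) v"
    "\<And>v. snd v \<ge> snd (NN z) - 1 \<Longrightarrow> HH z v = 0"
  using someI_ex[OF dynkin_end[OF assms]] unfolding NN_def[symmetric] by auto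

lemma UU_inj: assumes "n \<in> V" "m \<in> V" "\<And>v. UU n v = UU m v" shows "n = m"
proof -
  have "UU m n = 1" using assms homg_self[of idc n] by simp
  then have "snd n \<ge> snd m" using homg_low[of n m] by (cases "snd n < snd m") auto
  moreover have "UU n m = 1" using assms homg_self[of idc m] by simp
  then have "snd m \<ge> snd n" using homg_low[of m n] by (cases "snd m < snd n") auto
  ultimately have "snd m = snd n" by simp
  then have "UU m n = (if n = m then 1 else 0)" using homg_same_layer[of idc m n] assms by simp
  then show ?thesis using \<open>UU m n = 1\<close> by (simp split: if_splits)
qed

lemma NN_unique:
  assumes z: "z \<in> V" and n: "n \<in> V" and h: "\<And>v. HH z v = UU z v + UU n v"
  shows "NN z = n"
  using UU_inj[OF NN_props(1)[OF z] n] NN_props(3)[OF z] h by (metis add_left_cancel)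

lemma NN_tau_inv: assumes z: "z \<in> V" shows "NN (tau_inv z) = tau_inv (NN z)"
proof (rule NN_unique)
  show "tau_inv z \<in> V" using z V_tau by simp
  show "tau_inv (NN z) \<in> V" using NN_props(1)[OF z] V_tau by simp
  fix v
  have "HH (tau_inv z) v = HH z (tau v)" by (rule homg_shift') (use z in simp_all)
  also have "\<dots> = UU z (tau v) + UU (NN z) (tau v)" by (rule NN_props(3)[OF z])
  also have "UU z (tau v) = UU (tau_inv z) v" by (rule homg_shift'[symmetric]) (use z in simp_all)
  also have "UU (NN z) (tau v) = UU (tau_inv (NN z)) v"
    by (rule homg_shift'[symmetric]) (use NN_props(1)[OF z] in simp_all)
  finally show "HH (tau_inv z) v = UU (tau_inv z) v + UU (tau_inv (NN z)) v" .
qed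

lemma NN_tau: assumes z: "z \<in> V" shows "NN (tau z) = tau (NN z)"
proof -
  have "tau z \<in> V" using z V_tau by simp
  then have "NN (tau_inv (tau z)) = tau_inv (NN (tau z))" by (rule NN_tau_inv)
  then show ?thesis by (metis tau_tau_inv)
qed

lemma H_tilde:
  assumes z: "z \<in> V" and v: "v \<in> V"
  shows "HH z v + HH z (tau v) - (\<Sum>w\<in>preds v. HH z w) = (if v = z then 1 else 0) + (if v = NN z then 1 else 0)"
proof -
  have nV: "NN z \<in> V" by (rule NN_props(1)[OF z])
  have "(\<Sum>w\<in>preds v. HH z w) = (\<Sum>w\<in>preds v. UU z w) + (\<Sum>w\<in>preds v. UU (NN z) w)"
    unfolding NN_props(3)[OF z] by (simp add: sum.distrib)
  then show ?thesis using U_tilde[OF z v] U_tilde[OF nV v] NN_props(3)[OF z, of v] NN_props(3)[OF z, of "tau v"]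
    by simp
qed

end

context dq
begin

definition KK :: "'i \<times> int \<Rightarrow> 'i \<times> int \<Rightarrow> int" where "KK a v = HH (fl v) (fl a)"
definition NP :: "'i \<times> int \<Rightarrow> 'i \<times> int" where "NP v = fl (NN (fl v))"

lemma tau_inv_eq: "tau_inv a = z \<longleftrightarrow> a = tau z"
  by (cases a, cases z) (auto simp: tau_def tau_inv_def)

lemma flV: "v \<in> V \<Longrightarrow> fl v \<in> V" using V_tau by simp

lemma NP_props: assumes "v \<in> V" shows "NP v \<in> V" "snd (NP v) \<le> snd v - 2"
  using NN_props(1,2)[OF flV[OF assms]] V_tau unfolding NP_def by auto

lemma NP_tau: assumes "v \<in> V" shows "NP (tau v) = tau (NP v)"
proof -
  have "fl (tau v) = tau_inv (fl v)" by (rule fl_tau)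
  then have "NN (fl (tau v)) = tau_inv (NN (fl v))" using NN_tau_inv[OF flV[OF assms]] by simp
  then show ?thesis unfolding NP_def by (simp add: fl_tau)
qed

lemma K_tilde:
  assumes a: "a \<in> V" and v: "v \<in> V"
  shows "KK a v + KK (tau_inv a) v - (\<Sum>b\<in>succs a. KK b v) = (if a = v then 1 else 0) + (if a = NP v then 1 else 0)"
proof -
  have h: "HH (fl v) (fl a) + HH (fl v) (tau (fl a)) - (\<Sum>w\<in>preds (fl a). HH (fl v) w)
     = (if fl a = fl v then 1 else 0) + (if fl a = NN (fl v) then 1 else 0)"
    by (rule H_tilde[OF flV[OF v] flV[OF a]])
  have "(\<Sum>w\<in>preds (fl a). HH (fl v) w) = (\<Sum>b\<in>succs a. KK b v)"
    unfolding preds_fl KK_def by (simp add: sum.reindex inj_on_def fl_inj)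
  moreover have "HH (fl v) (tau (fl a)) = KK (tau_inv a) v" unfolding KK_def by (simp add: fl_tau)
  moreover have "fl a = NN (fl v) \<longleftrightarrow> a = NP v" unfolding NP_def by (metis fl_fl)
  ultimately show ?thesis using h unfolding KK_def[symmetric] by (simp add: fl_inj)
qed

lemma K_low: "snd a > snd v \<Longrightarrow> KK a v = 0" unfolding KK_def by (rule homg_low) simp
lemma K_high: "v \<in> V \<Longrightarrow> snd a \<le> snd (NP v) + 1 \<Longrightarrow> KK a v = 0"
  unfolding KK_def by (rule NN_props(4)[OF flV]) (auto simp: NP_def)
lemma K_nn: "v \<in> V \<Longrightarrow> KK a v \<ge> 0" unfolding KK_def using HH_nn flV by blast
lemma K_self: "v \<in> V \<Longrightarrow> KK v v = 1" unfolding KK_def using homg_self[of "max 0"] flV by simp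
lemma K_rec:
  assumes v: "v \<in> V"
  shows "KK a v = (if a \<notin> V \<or> snd a > snd v then 0 else if a = v then 1
          else max 0 ((\<Sum>b\<in>succs a. KK b v) - KK (tau_inv a) v))"
proof -
  have "KK a v = (if fl a \<notin> V \<or> snd (fl a) < snd (fl v) then 0 else if fl a = fl v then 1
            else max 0 ((\<Sum>w\<in>preds (fl a). HH (fl v) w) - HH (fl v) (tau (fl a))))"
    unfolding KK_def by (rule HC[OF flV[OF v]])
  moreover have "(\<Sum>w\<in>preds (fl a). HH (fl v) w) = (\<Sum>b\<in>succs a. KK b v)"
    unfolding preds_fl KK_def by (simp add: sum.reindex inj_on_def fl_inj)
  moreover have "HH (fl v) (tau (fl a)) = KK (tau_inv a) v" unfolding KK_def by (simp add: fl_tau)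
  ultimately show ?thesis by (simp add: V_tau fl_inj)
qed

lemma H_self_end:
  assumes z: "z \<in> V"
  shows "HH z (tau (NN z)) = 1"
proof -
  let ?n = "NN z"
  have nV: "?n \<in> V" by (rule NN_props(1)[OF z])
  have nz: "?n \<noteq> z" using NN_props(2)[OF z] by auto
  have "HH z ?n = 0" by (rule NN_props(4)[OF z]) simp
  moreover have "(\<Sum>w\<in>preds ?n. HH z w) = 0"
  proof (rule sum.neutral, intro ballI)
    fix w assume "w \<in> preds ?n"
    then have "snd w \<ge> snd ?n - 1" using preds_layer by simp
    then show "HH z w = 0" by (rule NN_props(4)[OF z])
  qed
  ultimately show ?thesis using H_tilde[OF z nV] nz by simp
qed

lemma trick:
  assumes z: "z \<in> V"
  shows "HH z a = KK a (tau (NN z))"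
proof -
  define p where "p = tau (NN z)"
  have pV: "p \<in> V" unfolding p_def using NN_props(1)[OF z] V_tau by simp
  have sp: "snd p = snd (NN z) - 2" unfolding p_def by simp
  show ?thesis unfolding p_def[symmetric]
  proof (induction a rule: layer_induct_down[where L="snd p"])
    case (1 a)
    have "HH z a = 0" by (rule NN_props(4)[OF z]) (use 1 sp in simp)
    then show ?case using K_low 1 by simp
  next
    case (2 a)
    show ?case
    proof (cases "a \<in> V")
      case False
      then show ?thesis using HH_nonV[OF z] K_rec[OF pV, of a] by simp
    next
      case aV: True
      show ?thesis
      proof (cases "a = p")
        case True
        then show ?thesis using H_self_end[OF z] K_self[OF pV] unfolding p_def by simp
      next
        case False
        have ta: "tau_inv a \<in> V" using aV V_tau by simp
        have ht: "HH z (tau_inv a) + HH z a - (\<Sum>w\<in>succs a. HH z w) = (if tau_inv a = z then 1 else 0) + (if tau_inv a = NN z then 1 else 0)"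
          using H_tilde[OF z ta] by (simp add: preds_tau_inv)
        have "tau_inv a \<noteq> NN z" using False unfolding p_def tau_inv_eq .
        then have ht': "HH z a = (\<Sum>w\<in>succs a. HH z w) - HH z (tau_inv a) + (if a = tau z then 1 else 0)"
          using ht unfolding tau_inv_eq by simp
        have s: "(\<Sum>b\<in>succs a. KK b p) = (\<Sum>b\<in>succs a. HH z b)"
          by (rule sum.cong[OF refl]) (use 2 succs_layer in fastforce)
        have t: "KK (tau_inv a) p = HH z (tau_inv a)" using 2 by simp
        have k: "KK a p = max 0 ((\<Sum>w\<in>succs a. HH z w) - HH z (tau_inv a))"
          using K_rec[OF pV, of a] aV 2(1) False s t by simp
        show ?thesis
        proof (cases "a = tau z")
          case True
          have "HH z a = 0" using True homg_low by simp
          then show ?thesis using ht' k True by simp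
        next
          case False
          then show ?thesis using ht' k HH_nn[OF z, of a] by simp
        qed
      qed
    qed
  qed
qed

lemma NP_NN_tau: assumes z: "z \<in> V" shows "NP (tau (NN z)) = tau z"
proof -
  define p where "p = tau (NN z)"
  have pV: "p \<in> V" unfolding p_def using NN_props(1)[OF z] V_tau by simp
  have tz: "tau z \<in> V" using z V_tau by simp
  have kt: "KK (tau z) p + KK (tau_inv (tau z)) p - (\<Sum>b\<in>succs (tau z). KK b p) = (if tau z = p then 1 else 0) + (if tau z = NP p then 1 else 0)"
    by (rule K_tilde[OF tz pV])
  have "KK (tau z) p = 0" using trick[OF z, of "tau z"] homg_low[of "tau z" z] unfolding p_def by simp
  moreover have "KK z p = 1" using trick[OF z, of z] homg_self[of "max 0" z] z unfolding p_def by simp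
  moreover have "(\<Sum>b\<in>succs (tau z). KK b p) = 0"
  proof (rule sum.neutral, intro ballI)
    fix b assume "b \<in> succs (tau z)"
    then have "snd b < snd z" using succs_layer by fastforce
    then show "KK b p = 0" using trick[OF z, of b] homg_low[of b z] unfolding p_def by simp
  qed
  moreover have "tau z \<noteq> p"
  proof
    assume "tau z = p"
    then have "snd (tau z) = snd p" by simp
    then show False using NN_props(2)[OF z] unfolding p_def by simp
  qed
  ultimately have "tau z = NP p" using kt by (simp split: if_splits)
  then show ?thesis unfolding p_def by simp
qed

lemma NP_NN: assumes z: "z \<in> V" shows "NP (NN z) = z"
  using NP_NN_tau[OF z] NP_tau[OF NN_props(1)[OF z]] by (simp add: tau_inj)

lemma NN_NP: assumes w: "w \<in> V" shows "NN (NP w) = w"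
proof -
  have "NP (NN (fl w)) = fl w" by (rule NP_NN[OF flV[OF w]])
  then have "fl (NN (fl (NN (fl w)))) = fl w" unfolding NP_def .
  then have "NN (fl (NN (fl w))) = w" using fl_inj by metis
  then show ?thesis unfolding NP_def .
qed

lemma NN_NP_iff: "a \<in> V \<Longrightarrow> v \<in> V \<Longrightarrow> a = NP v \<longleftrightarrow> v = NN a"
  using NN_NP NP_NN by metis

lemma H_eq_K_aux:
  "\<forall>a v. nat (snd v - snd a + 5) = m \<longrightarrow> a \<in> V \<longrightarrow> v \<in> V \<longrightarrow> HH a v = KK a v"
proof (induction m rule: less_induct)
  case (less m)
  show ?case
  proof (intro allI impI)
    fix a v assume m: "nat (snd v - snd a + 5) = m" and aV: "a \<in> V" and vV: "v \<in> V"
    have IH: "HH a2 v2 = KK a2 v2" if "a2 \<in> V" "v2 \<in> V" "snd v2 - snd a2 < snd v - snd a" "snd v - snd a \<ge> 0" for a2 v2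
    proof -
      have "nat (snd v2 - snd a2 + 5) < m" using that m by simp
      then show ?thesis using less that by blast
    qed
    show "HH a v = KK a v"
    proof (cases "snd v < snd a")
      case True then show ?thesis using homg_low K_low by simp
    next
      case False
      then have d0: "snd v - snd a \<ge> 0" by simp
      have tv: "tau v \<in> V" and ta: "tau_inv a \<in> V" using aV vV V_tau by auto
      have pV: "v' \<in> V" "snd v' = snd v - 1" if "v' \<in> preds v" for v' using preds_layer that by auto
      have sV: "a' \<in> V" "snd a' = snd a + 1" if "a' \<in> succs a" for a' using succs_layer that by auto
      define P1 where "P1 = (\<Sum>v'\<in>preds v. HH a v')"
      define S1 where "S1 = (\<Sum>v'\<in>preds v. (if a = NP v' then 1 else 0) :: int)"
      define S2 where "S2 = (\<Sum>a'\<in>succs a. (if v = NN a' then 1 else 0) :: int)"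
      define T1 where "T1 = (\<Sum>v'\<in>preds v. (if a = v' then 1 else 0) :: int)"
      define T4 where "T4 = (\<Sum>a'\<in>succs a. (if v = a' then 1 else 0) :: int)"
      define Q1 where "Q1 = (\<Sum>a'\<in>succs a. HH a' (tau v))"
      define R1 where "R1 = (\<Sum>a'\<in>succs a. HH a' v)"
      define T2 where "T2 = (\<Sum>v'\<in>preds v. HH (tau_inv a) v')"
      define T3 where "T3 = (\<Sum>a'\<in>succs a. \<Sum>v'\<in>preds v. HH a' v')"
      have e1: "HH a v + HH a (tau v) - P1 = (if v = a then 1 else 0) + (if v = NN a then 1 else 0)"
        unfolding P1_def by (rule H_tilde[OF aV vV])
      have e2: "HH a (tau v) = KK a (tau v)" by (rule IH[OF aV tv]) (use d0 in auto)
      have e3: "P1 = (\<Sum>v'\<in>preds v. KK a v')" unfolding P1_def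
        by (rule sum.cong[OF refl]) (rule IH[OF aV], use pV d0 in auto)
      have e4: "KK a (tau v) + KK (tau_inv a) (tau v) - (\<Sum>a'\<in>succs a. KK a' (tau v)) = (if a = tau v then 1 else 0) + (if a = NP (tau v) then 1 else 0)"
        by (rule K_tilde[OF aV tv])
      have e5: "(\<Sum>v'\<in>preds v. KK a v') = T1 + S1 - (\<Sum>v'\<in>preds v. KK (tau_inv a) v') + (\<Sum>v'\<in>preds v. \<Sum>a'\<in>succs a. KK a' v')"
      proof -
        have "(\<Sum>v'\<in>preds v. KK a v') = (\<Sum>v'\<in>preds v. (if a = v' then 1 else 0) + (if a = NP v' then 1 else 0) - KK (tau_inv a) v' + (\<Sum>a'\<in>succs a. KK a' v'))"
        proof (rule sum.cong[OF refl])
          fix v' assume "v' \<in> preds v"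
          then have "v' \<in> V" using pV by simp
          from K_tilde[OF aV this] show "KK a v' = (if a = v' then 1 else 0) + (if a = NP v' then 1 else 0) - KK (tau_inv a) v' + (\<Sum>a'\<in>succs a. KK a' v')"
            by simp
        qed
        then show ?thesis unfolding T1_def S1_def by (simp add: sum.distrib sum_subtractf)
      qed
      have e6a: "KK (tau_inv a) (tau v) = HH (tau_inv a) (tau v)" by (rule IH[OF ta tv, symmetric]) (use d0 in auto)
      have e6b: "(\<Sum>a'\<in>succs a. KK a' (tau v)) = Q1" unfolding Q1_def
        by (rule sum.cong[OF refl]) (rule IH[symmetric], use sV tv d0 in auto)
      have e6c: "(\<Sum>v'\<in>preds v. KK (tau_inv a) v') = T2" unfolding T2_def
        by (rule sum.cong[OF refl]) (rule IH[symmetric], use pV ta d0 in auto)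
      have e6d: "(\<Sum>v'\<in>preds v. \<Sum>a'\<in>succs a. KK a' v') = T3" unfolding T3_def
        by (subst sum.swap) (intro sum.cong refl IH[symmetric], use pV sV d0 in auto)
      have e7: "T3 = R1 - T4 - S2 + Q1"
      proof -
        have "T3 = (\<Sum>a'\<in>succs a. HH a' v - (if v = a' then 1 else 0) - (if v = NN a' then 1 else 0) + HH a' (tau v))"
          unfolding T3_def
        proof (rule sum.cong[OF refl])
          fix a' assume "a' \<in> succs a"
          then have "a' \<in> V" using sV by simp
          from H_tilde[OF this vV] show "(\<Sum>v'\<in>preds v. HH a' v') = HH a' v - (if v = a' then 1 else 0) - (if v = NN a' then 1 else 0) + HH a' (tau v)"
            by simp
        qed
        then show ?thesis unfolding R1_def T4_def S2_def Q1_def by (simp add: sum.distrib sum_subtractf)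
      qed
      have e8: "HH (tau_inv a) v + HH (tau_inv a) (tau v) - T2 = (if v = tau_inv a then 1 else 0) + (if v = NN (tau_inv a) then 1 else 0)"
        unfolding T2_def by (rule H_tilde[OF ta vV])
      have e9a: "R1 = (\<Sum>a'\<in>succs a. KK a' v)" unfolding R1_def
        by (rule sum.cong[OF refl]) (rule IH, use sV vV d0 in auto)
      have e9b: "HH (tau_inv a) v = KK (tau_inv a) v" by (rule IH[OF ta vV]) (use d0 in auto)
      have e10: "KK a v + KK (tau_inv a) v - (\<Sum>a'\<in>succs a. KK a' v) = (if a = v then 1 else 0) + (if a = NP v then 1 else 0)"
        by (rule K_tilde[OF aV vV])
      have f1: "(if a = NP v then 1 else 0) = (if v = NN a then (1::int) else 0)" using NN_NP_iff[OF aV vV] by simp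
      have f2: "(if a = NP (tau v) then 1 else 0) = (if v = NN (tau_inv a) then (1::int) else 0)"
      proof -
        have "a = NP (tau v) \<longleftrightarrow> tau v = NN a" by (rule NN_NP_iff[OF aV tv])
        also have "\<dots> \<longleftrightarrow> v = tau_inv (NN a)" by (metis tau_tau_inv)
        also have "tau_inv (NN a) = NN (tau_inv a)" using NN_tau_inv[OF aV] by simp
        finally show ?thesis by simp
      qed
      have f3: "(if a = tau v then 1 else 0) = (if v = tau_inv a then (1::int) else 0)" by (metis tau_tau_inv)
      have f4: "T1 = T4" unfolding T1_def T4_def using preds_fin succs_fin
        by (simp add: succ_iff_pred eq_commute[of a] eq_commute[of v])
      have f5: "(if v = a then 1 else 0) = (if a = v then (1::int) else 0)" by auto
      have diff: "HH a v = KK a v + S1 - S2"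
        using e1 e2 e3 e4 e5 e6a e6b e6c e6d e7 e8 e9a e9b e10 f1 f2 f3 f4 f5 by linarith
      have S1nn: "S1 \<ge> 0" unfolding S1_def by (intro sum_nonneg) auto
      have S2nn: "S2 \<ge> 0" unfolding S2_def by (intro sum_nonneg) auto
      have S1H: "HH a v = 0" if "S1 \<noteq> 0"
      proof -
        have "\<exists>v'\<in>preds v. a = NP v'"
        proof (rule ccontr)
          assume "\<not> ?thesis"
          then have "S1 = 0" unfolding S1_def by (intro sum.neutral) auto
          with that show False by simp
        qed
        then obtain v' where v': "v' \<in> preds v" "a = NP v'" by blast
        then have "v' = NN a" using NN_NP_iff[OF aV] pV by blast
        then have "snd v \<ge> snd (NN a) - 1" using pV v' by simp
        then show ?thesis by (rule NN_props(4)[OF aV])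
      qed
      have S2K: "KK a v = 0" if "S2 \<noteq> 0"
      proof -
        have "\<exists>a'\<in>succs a. v = NN a'"
        proof (rule ccontr)
          assume "\<not> ?thesis"
          then have "S2 = 0" unfolding S2_def by (intro sum.neutral) auto
          with that show False by simp
        qed
        then obtain a' where a': "a' \<in> succs a" "v = NN a'" by blast
        then have "NP v = a'" using NP_NN sV by blast
        then have "snd a \<le> snd (NP v) + 1" using sV a' by simp
        then show ?thesis by (rule K_high[OF vV])
      qed
      show ?thesis
        using diff S1nn S2nn S1H S2K HH_nn[OF aV, of v] K_nn[OF vV, of a]
        by (cases "S1 = 0"; cases "S2 = 0") auto
    qed
  qed
qed

lemma H_eq_K: "a \<in> V \<Longrightarrow> v \<in> V \<Longrightarrow> HH a v = KK a v"
  using H_eq_K_aux by blast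

lemma contra_mesh:
  assumes x: "x \<in> V" and v: "v \<in> V"
  shows "HH x v + HH (tau_inv x) v - (\<Sum>y\<in>succs x. HH y v) = (if x = v then 1 else 0) + (if v = NN x then 1 else 0)"
proof -
  have tx: "tau_inv x \<in> V" using x V_tau by simp
  have "(\<Sum>y\<in>succs x. HH y v) = (\<Sum>y\<in>succs x. KK y v)"
    by (rule sum.cong[OF refl]) (rule H_eq_K, use succs_layer v in auto)
  then show ?thesis using K_tilde[OF x v] H_eq_K[OF x v] H_eq_K[OF tx v] NN_NP_iff[OF x v] by simp
qed

lemma serre_prop:
  assumes x: "x \<in> V" and y: "y \<in> V"
  shows "HH y (tau (NN x)) = HH x y"
proof -
  have pV: "tau (NN x) \<in> V" using NN_props(1)[OF x] V_tau by simp
  show ?thesis using H_eq_K[OF y pV] trick[OF x, of y] by simp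
qed

lemma serre_unique:
  assumes x: "x \<in> V" and z: "z \<in> V" and h: "\<forall>y\<in>V. HH y z = HH x y"
  shows "z = tau (NN x)"
proof -
  define p where "p = tau (NN x)"
  have pV: "p \<in> V" unfolding p_def using NN_props(1)[OF x] V_tau by simp
  have hp: "\<forall>y\<in>V. HH y z = HH y p" using h serre_prop[OF x] unfolding p_def by simp
  have "HH z p = 1" using hp homg_self[of "max 0" z] z by simp
  then have "snd p \<ge> snd z" using homg_low[of p z] by (cases "snd p < snd z") auto
  moreover have "HH p z = 1" using hp homg_self[of "max 0" p] pV by simp
  then have "snd z \<ge> snd p" using homg_low[of z p] by (cases "snd z < snd p") auto
  ultimately have "HH z p = (if p = z then 1 else 0)" using homg_same_layer[of "max 0" z p] z by simp
  then show ?thesis using \<open>HH z p = 1\<close> unfolding p_def by (simp split: if_splits)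
qed

end

lemma potential_exists:
  fixes I :: "'i set" and A :: "('i \<times> 'i) set"
  assumes "finite I" "A \<subseteq> I \<times> I" "\<And>v. (\<exists>i\<in>I. v i \<noteq> 0) \<Longrightarrow> tits_form I A v > 0"
  shows "\<exists>p :: 'i \<Rightarrow> int. \<forall>(s,t)\<in>A. p s - p t = 1"
  using assms
proof (induction "card I" arbitrary: I A rule: less_induct)
  case less
  note finI = less.prems(1) and AI = less.prems(2) and posI = less.prems(3)
  have finA: "finite A" using finI AI finite_subset by blast
  show ?case
  proof (cases "I = {}")
    case True
    then have "A = {}" using AI by auto
    then show ?thesis by simp
  next
    case Ine: False
    define deg where "deg i = card {e \<in> A. fst e = i \<or> snd e = i}" for i
    have noloop: "(i, i) \<notin> A" for i
    proof
      assume a: "(i,i) \<in> A"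
      then have "i \<in> I" using AI by auto
      then have "tits_form I A (\<lambda>j. if j = i then 1 else 0) > 0" by (intro posI) auto
      with tits_unit[OF finA \<open>i \<in> I\<close> finI] a show False by simp
    qed
    have "\<exists>a\<in>I. deg a \<le> 1"
    proof (rule ccontr)
      assume "\<not> ?thesis"
      then have d2: "\<forall>i\<in>I. deg i \<ge> 2" by auto
      have "tits_form I A (\<lambda>_. 1) > 0" using Ine by (intro posI) auto
      then have cA: "card A < card I" unfolding tits_form_def by simp
      have "(\<Sum>i\<in>I. deg i) = (\<Sum>i\<in>I. \<Sum>e\<in>A. if fst e = i \<or> snd e = i then 1 else 0)"
        unfolding deg_def using finA by (simp add: sum.If_cases Int_def)
      also have "\<dots> = (\<Sum>e\<in>A. \<Sum>i\<in>I. if fst e = i \<or> snd e = i then 1 else 0)" by (rule sum.swap)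
      also have "\<dots> \<le> (\<Sum>e\<in>A. 2)"
      proof (rule sum_mono)
        fix e assume "e \<in> A"
        have "(\<Sum>i\<in>I. if fst e = i \<or> snd e = i then 1 else 0) = card {i\<in>I. fst e = i \<or> snd e = i}"
          using finI by (simp add: sum.If_cases Int_def)
        also have "\<dots> \<le> card {fst e, snd e}" by (rule card_mono) auto
        also have "\<dots> \<le> 2" by (rule card_insert_le_m1) auto
        finally show "(\<Sum>i\<in>I. if fst e = i \<or> snd e = i then 1 else 0) \<le> (2::nat)" .
      qed
      also have "\<dots> = 2 * card A" by simp
      finally have "(\<Sum>i\<in>I. deg i) \<le> 2 * card A" .
      moreover have "(\<Sum>i\<in>I. deg i) \<ge> (\<Sum>i\<in>I. 2)" using d2 by (intro sum_mono) auto
      ultimately show False using cA by simp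
    qed
    then obtain a where aI: "a \<in> I" and da: "deg a \<le> 1" by blast
    define I' where "I' = I - {a}"
    define A' where "A' = {e \<in> A. fst e \<noteq> a \<and> snd e \<noteq> a}"
    have cI: "card I' < card I" unfolding I'_def using aI finI by (meson card_Diff1_less)
    have A'I: "A' \<subseteq> I' \<times> I'" unfolding A'_def I'_def using AI by auto
    have pos': "tits_form I' A' v > 0" if "\<exists>i\<in>I'. v i \<noteq> 0" for v
    proof -
      define v0 where "v0 = v(a := 0)"
      have "tits_form I A v0 > 0" using that unfolding I'_def v0_def by (intro posI) auto
      moreover have "(\<Sum>i\<in>I. (v0 i)^2) = (\<Sum>i\<in>I'. (v i)^2)"
      proof -
        have "(\<Sum>i\<in>I. (v0 i)^2) = (v0 a)^2 + (\<Sum>i\<in>I'. (v0 i)^2)" unfolding I'_def using aI finI by (simp add: sum.remove)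
        also have "(\<Sum>i\<in>I'. (v0 i)^2) = (\<Sum>i\<in>I'. (v i)^2)" unfolding I'_def v0_def by (intro sum.cong) auto
        finally show ?thesis unfolding v0_def by simp
      qed
      moreover have "(\<Sum>(s,t)\<in>A. v0 s * v0 t) = (\<Sum>(s,t)\<in>A'. v s * v t)"
      proof -
        have "(\<Sum>(s,t)\<in>A. v0 s * v0 t) = (\<Sum>(s,t)\<in>A'. v0 s * v0 t)"
          by (rule sum.mono_neutral_right) (use finA in \<open>auto simp: A'_def v0_def\<close>)
        also have "\<dots> = (\<Sum>(s,t)\<in>A'. v s * v t)" by (rule sum.cong) (auto simp: A'_def v0_def)
        finally show ?thesis .
      qed
      ultimately show ?thesis unfolding tits_form_def by simp
    qed
    have fin': "finite I'" unfolding I'_def using finI by simp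
    have "\<exists>p :: 'i \<Rightarrow> int. \<forall>(s,t)\<in>A'. p s - p t = 1"
      by (rule less.hyps[OF cI fin' A'I pos'])
    then obtain p' :: "'i \<Rightarrow> int" where p': "\<forall>(s,t)\<in>A'. p' s - p' t = 1" by blast
    have Adec: "A = A' \<union> {e \<in> A. fst e = a \<or> snd e = a}" unfolding A'_def by auto
    show ?thesis
    proof (cases "deg a = 0")
      case True
      then have "{e \<in> A. fst e = a \<or> snd e = a} = {}" unfolding deg_def using finA by simp
      then have "A = A'" unfolding A'_def by blast
      then show ?thesis using p' by blast
    next
      case False
      then have "deg a = 1" using da by simp
      then obtain e where e: "{e \<in> A. fst e = a \<or> snd e = a} = {e}" unfolding deg_def using card_1_singletonE by blast
      then have eA: "e \<in> A" "fst e = a \<or> snd e = a" by auto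
      have other: "x \<in> A \<Longrightarrow> x \<noteq> e \<Longrightarrow> x \<in> A'" for x using e unfolding A'_def by auto
      obtain s0 t0 where st: "e = (s0, t0)" by (cases e)
      have st0: "s0 \<noteq> t0" using noloop eA st by auto
      show ?thesis
      proof (cases "fst e = a")
        case True
        then have s0a: "s0 = a" using st by simp
        define p where "p = p'(a := p' t0 + 1)"
        have "\<forall>(s,t)\<in>A. p s - p t = 1"
        proof (intro ballI, clarify)
          fix s t assume "(s,t) \<in> A"
          show "p s - p t = 1"
          proof (cases "(s,t) = e")
            case True then show ?thesis using st s0a st0 unfolding p_def by auto
          next
            case False
            then have "(s,t) \<in> A'" using other \<open>(s,t) \<in> A\<close> by blast
            then have "s \<noteq> a" "t \<noteq> a" "p' s - p' t = 1" using p' unfolding A'_def by auto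
            then show ?thesis unfolding p_def by simp
          qed
        qed
        then show ?thesis by blast
      next
        case False
        then have t0a: "t0 = a" using st eA by simp
        define p where "p = p'(a := p' s0 - 1)"
        have "\<forall>(s,t)\<in>A. p s - p t = 1"
        proof (intro ballI, clarify)
          fix s t assume "(s,t) \<in> A"
          show "p s - p t = 1"
          proof (cases "(s,t) = e")
            case True then show ?thesis using st t0a st0 unfolding p_def by auto
          next
            case False
            then have "(s,t) \<in> A'" using other \<open>(s,t) \<in> A\<close> by blast
            then have "s \<noteq> a" "t \<noteq> a" "p' s - p' t = 1" using p' unfolding A'_def by auto
            then show ?thesis unfolding p_def by simp
          qed
        qed
        then show ?thesis by blast
      qed
    qed
  qed
qed


context dq
begin

definition p0 :: "'i \<Rightarrow> int" where "p0 = (SOME p. \<forall>(s,t)\<in>A. p s - p t = 1)"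

lemma p0_pot: "\<forall>(s,t)\<in>A. p0 s - p0 t = 1"
proof -
  have ex: "\<exists>p :: 'i \<Rightarrow> int. \<forall>(s,t)\<in>A. p s - p t = 1" by (rule potential_exists[OF finI AI pos])
  show ?thesis unfolding p0_def using someI_ex[OF ex] .
qed

definition pz :: "'i \<times> int \<Rightarrow> 'i \<Rightarrow> int" where "pz z i = p0 i + (snd z - p0 (fst z))"

lemma pz_pot: "\<forall>(s,t)\<in>A. pz z s - pz z t = 1" using p0_pot unfolding pz_def by auto
lemma pz_fst: "pz z (fst z) = snd z" unfolding pz_def by simp

lemma pz_nb: "j \<in> nb i \<Longrightarrow> pz z j \<le> pz z i + 1 \<and> pz z j \<ge> pz z i - 1"
  using pz_pot[of z] unfolding nbr_def by fastforce

lemma pot_const: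
  assumes p: "\<forall>(s,t)\<in>A. p s - p t = (1::int)" and q: "\<forall>(s,t)\<in>A. q s - q t = (1::int)"
    and ij: "i \<in> I" "j \<in> I"
  shows "p j - q j = p i - q i"
proof -
  have "(i, j) \<in> (A \<union> A\<inverse>)\<^sup>*" using conn ij by blast
  then show ?thesis
  proof (induction rule: rtrancl_induct)
    case base then show ?case by simp
  next
    case (step k l)
    have "p l - q l = p k - q k"
    proof (cases "(k,l) \<in> A")
      case True
      then have "p k - p l = 1" "q k - q l = 1" using bspec[OF p True] bspec[OF q True] by simp_all
      then show ?thesis by simp
    next
      case False
      then have kl: "(l,k) \<in> A" using step(2) by auto
      then have "p l - p k = 1" "q l - q k = 1" using bspec[OF p kl] bspec[OF q kl] by simp_all
      then show ?thesis by simp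
    qed
    then show ?case using step by simp
  qed
qed

lemma pz_V: assumes z: "z \<in> V" and i: "i \<in> I" shows "(i, pz z i) \<in> V"
proof -
  have fz: "fst z \<in> I" using z V_iff' by blast
  have "(fst z, i) \<in> (A \<union> A\<inverse>)\<^sup>*" using conn[OF fz i] .
  then have "even (pz z i) \<longleftrightarrow> par i"
  proof (induction rule: rtrancl_induct)
    case base then show ?case using z V_iff' pz_fst[of z] by simp
  next
    case (step k l)
    have pp: "pz z l = pz z k + 1 \<or> pz z l = pz z k - 1" and pr: "par l \<noteq> par k"
    proof -
      show "pz z l = pz z k + 1 \<or> pz z l = pz z k - 1"
      proof (cases "(k,l) \<in> A")
        case True then have "pz z k - pz z l = 1" using bspec[OF pz_pot True] by simp
        then show ?thesis by simp
      next
        case False then have kl: "(l,k) \<in> A" using step(2) by auto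
        then have "pz z l - pz z k = 1" using bspec[OF pz_pot kl] by simp
        then show ?thesis by simp
      qed
      show "par l \<noteq> par k"
      proof (cases "(k,l) \<in> A")
        case True then show ?thesis using alt' by metis
      next
        case False then have kl: "(l,k) \<in> A" using step(2) by auto
        then show ?thesis using alt' by metis
      qed
    qed
    have "even (pz z l) \<longleftrightarrow> \<not> even (pz z k)" using pp by auto
    then show ?case using step.IH pr by auto
  qed
  then show ?thesis using i V_iff by simp
qed

lemma section_of_eq:
  assumes z: "z \<in> V"
  shows "section_of I A z = {(i, pz z i) | i. i \<in> I}"
  unfolding section_of_def
proof (rule the_equality)
  have "fst z \<in> I" using z V_iff' by blast
  then show "is_section I A {(i, pz z i) | i. i \<in> I} \<and> z \<in> {(i, pz z i) | i. i \<in> I}"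
    unfolding is_section_def using pz_pot[of z] pz_fst[of z] by (auto intro!: exI[of _ "fst z"] simp: prod_eq_iff)
  fix S assume "is_section I A S \<and> z \<in> S"
  then obtain p where p: "\<forall>(s,t)\<in>A. p s - p t = 1" and S: "S = {(i, p i) | i. i \<in> I}" and zS: "z \<in> S"
    unfolding is_section_def by blast
  obtain i0 where i0: "i0 \<in> I" "z = (i0, p i0)" using zS S by blast
  have "p i = pz z i" if "i \<in> I" for i
    using pot_const[OF p pz_pot[of z] i0(1) that] i0 pz_fst[of z] by simp
  then show "S = {(i, pz z i) | i. i \<in> I}" unfolding S by force
qed

lemma reach_bound:
  assumes z: "z \<in> V"
  shows "HH z w \<noteq> 0 \<Longrightarrow> pz z (fst w) \<le> snd w"
proof (induction w rule: layer_induct[where L="snd z"])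
  case (1 w) then show ?case using homg_low by simp
next
  case (2 w)
  show ?case
  proof (cases "w = z")
    case True then show ?thesis using pz_fst by simp
  next
    case False
    have wV: "w \<in> V" using 2 HH_nonV[OF z] by blast
    have "max 0 ((\<Sum>u\<in>preds w. HH z u) - HH z (tau w)) \<noteq> 0" using HC[OF z, of w] 2 False wV by simp
    then have "(\<Sum>u\<in>preds w. HH z u) \<noteq> 0" using HH_nn[OF z, of "tau w"] by auto
    then obtain u where u: "u \<in> preds w" "HH z u \<noteq> 0" using sum.neutral by (metis (mono_tags, lifting))
    have "snd u = snd w - 1" using preds_layer u by simp
    then have "pz z (fst u) \<le> snd w - 1" using 2(2)[of u] u by simp
    moreover have "fst u \<in> nb (fst w)" using u(1) wV preds_eq by auto
    ultimately show ?thesis using pz_nb[of "fst w" "fst u" z] nbr_sym by fastforce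
  qed
qed

lemma region:
  assumes z: "z \<in> V"
  shows "snd v \<le> pz z (fst v) \<Longrightarrow> HH z v = UU z v"
proof (induction v rule: layer_induct[where L="snd z"])
  case (1 v) then show ?case using homg_low by simp
next
  case (2 v)
  show ?case
  proof (cases "v \<notin> V \<or> v = z")
    case True then show ?thesis using HC[OF z, of v] UC[OF z, of v] by auto
  next
    case False
    then have vV: "v \<in> V" and vz: "v \<noteq> z" by auto
    have pr: "(\<Sum>u\<in>preds v. HH z u) = (\<Sum>u\<in>preds v. UU z u)"
    proof (rule sum.cong[OF refl])
      fix u assume u: "u \<in> preds v"
      have "fst u \<in> nb (fst v)" using u vV preds_eq by auto
      then have "pz z (fst u) \<ge> pz z (fst v) - 1" using pz_nb nbr_sym by blast
      moreover have "snd u = snd v - 1" using preds_layer u by simp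
      ultimately show "HH z u = UU z u" using 2(2)[of u] 2(3) by simp
    qed
    have t0: "HH z (tau v) = 0"
    proof (rule ccontr)
      assume "HH z (tau v) \<noteq> 0"
      then have "pz z (fst v) \<le> snd v - 2" using reach_bound[OF z] by fastforce
      then show False using 2(3) by simp
    qed
    have t1: "UU z (tau v) = 0" using t0 2(2)[of "tau v"] 2(3) by simp
    have "(\<Sum>u\<in>preds v. HH z u) \<ge> 0" using HH_nn[OF z] by (intro sum_nonneg) auto
    then show ?thesis using HC[OF z, of v] UC[OF z, of v] vV vz 2(1) pr t0 t1 by simp
  qed
qed

lemma tilde_eq: "tilde I A par f v = f v + f (tau v) - (\<Sum>w\<in>preds v. f w)"
  unfolding tilde_def by simp

lemma unique_from_section:
  assumes z: "z \<in> V"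
    and t: "\<forall>v\<in>V. d v + d (tau v) - (\<Sum>w\<in>preds v. d w) = 0"
    and s: "\<forall>i\<in>I. d (i, pz z i) = (0::int)"
    and o: "\<forall>v. v \<notin> V \<longrightarrow> d v = 0"
  shows "d v = 0"
proof -
  define m where "m = Min (pz z ` I)"
  define M where "M = Max (pz z ` I)"
  have mle: "i \<in> I \<Longrightarrow> m \<le> pz z i" for i unfolding m_def using finI by simp
  have Mge: "i \<in> I \<Longrightarrow> pz z i \<le> M" for i unfolding M_def using finI by simp
  have par2: "snd v \<ge> pz z (fst v) + 2 \<or> snd v \<le> pz z (fst v) - 2" if vV: "v \<in> V" and ne: "snd v \<noteq> pz z (fst v)" for v
  proof -
    have fI: "fst v \<in> I" using vV V_iff' by blast
    have "(fst v, pz z (fst v)) \<in> V" using pz_V[OF z fI] .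
    then have e1: "even (pz z (fst v)) \<longleftrightarrow> par (fst v)" using V_iff by blast
    have e2: "even (snd v) \<longleftrightarrow> par (fst v)" using vV V_iff' by blast
    have "even (snd v - pz z (fst v))" using e1 e2 by simp
    then obtain k where k: "snd v - pz z (fst v) = 2 * k" by (rule evenE)
    then have "k \<noteq> 0" using ne by auto
    then have "k \<ge> 1 \<or> k \<le> -1" by linarith
    then show ?thesis using k by linarith
  qed
  have fwd: "snd v \<ge> pz z (fst v) \<longrightarrow> d v = 0" for v
  proof (induction v rule: layer_induct[where L=m])
    case (1 v)
    show ?case
    proof
      assume a: "snd v \<ge> pz z (fst v)"
      show "d v = 0"
      proof (cases "v \<in> V")
        case True then show ?thesis using mle[of "fst v"] V_iff' 1 a by fastforce
      next
        case False then show ?thesis using o by blast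
      qed
    qed
  next
    case (2 v)
    show ?case
    proof
      assume a: "snd v \<ge> pz z (fst v)"
      show "d v = 0"
      proof (cases "v \<in> V")
        case False then show ?thesis using o by blast
      next
        case vV: True
        show ?thesis
        proof (cases "snd v = pz z (fst v)")
          case True then show ?thesis using s vV V_iff' by (metis prod.collapse)
        next
          case False
          then have g2: "snd v \<ge> pz z (fst v) + 2" using par2[OF vV] a by auto
          have "(\<Sum>w\<in>preds v. d w) = 0"
          proof (rule sum.neutral, intro ballI)
            fix w assume w: "w \<in> preds v"
            have "fst w \<in> nb (fst v)" using w vV preds_eq by auto
            then have "pz z (fst w) \<le> pz z (fst v) + 1" using pz_nb nbr_sym by blast
            moreover have "snd w = snd v - 1" using preds_layer w by simp
            ultimately show "d w = 0" using 2(2)[of w] g2 by simp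
          qed
          moreover have "d (tau v) = 0" using 2(2)[of "tau v"] g2 by simp
          ultimately show ?thesis using bspec[OF t vV] by simp
        qed
      qed
    qed
  qed
  have bwd: "snd v \<le> pz z (fst v) \<longrightarrow> d v = 0" for v
  proof (induction v rule: layer_induct_down[where L=M])
    case (1 v)
    show ?case
    proof
      assume a: "snd v \<le> pz z (fst v)"
      show "d v = 0"
      proof (cases "v \<in> V")
        case True then show ?thesis using Mge[of "fst v"] V_iff' 1 a by fastforce
      next
        case False then show ?thesis using o by blast
      qed
    qed
  next
    case (2 v)
    show ?case
    proof
      assume a: "snd v \<le> pz z (fst v)"
      show "d v = 0"
      proof (cases "v \<in> V")
        case False then show ?thesis using o by blast
      next
        case vV: True
        show ?thesis
        proof (cases "snd v = pz z (fst v)")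
          case True then show ?thesis using s vV V_iff' by (metis prod.collapse)
        next
          case False
          then have g2: "snd v \<le> pz z (fst v) - 2" using par2[OF vV] a by auto
          define u where "u = tau_inv v"
          have uV: "u \<in> V" unfolding u_def using vV V_tau by simp
          have tu: "tau u = v" unfolding u_def by simp
          have "(\<Sum>w\<in>preds u. d w) = 0"
          proof (rule sum.neutral, intro ballI)
            fix w assume w: "w \<in> preds u"
            have "fst w \<in> nb (fst u)" using w uV preds_eq by auto
            then have "pz z (fst w) \<ge> pz z (fst v) - 1" using pz_nb nbr_sym unfolding u_def by fastforce
            moreover have "snd w = snd v + 1" using preds_layer w unfolding u_def by simp
            ultimately show "d w = 0" using 2(2)[of w] g2 by simp
          qed
          moreover have "d u = 0" using 2(2)[of u] g2 unfolding u_def by simp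
          ultimately show ?thesis using bspec[OF t uV] tu by simp
        qed
      qed
    qed
  qed
  show ?thesis using fwd[of v] bwd[of v] by linarith
qed

lemma hfun_eq:
  assumes z: "z \<in> V"
  shows "hfun I A par z = UU z"
  unfolding hfun_def
proof (rule the_equality)
  show "(\<forall>v\<in>V. tilde I A par (UU z) v = delta z v) \<and> (\<forall>y\<in>section_of I A z. UU z y = hom_dim I A par z y) \<and> (\<forall>v. v \<notin> V \<longrightarrow> UU z v = 0)"
  proof (intro conjI ballI allI impI)
    fix v assume "v \<in> V"
    then show "tilde I A par (UU z) v = delta z v" unfolding tilde_eq delta_def using U_tilde[OF z] by simp
  next
    fix y assume "y \<in> section_of I A z"
    then obtain i where "i \<in> I" "y = (i, pz z i)" unfolding section_of_eq[OF z] by blast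
    then show "UU z y = hom_dim I A par z y" unfolding hom_dim_eq using region[OF z, of y] by simp
  next
    fix v assume "v \<notin> V" then show "UU z v = 0" using UU_nonV[OF z] by simp
  qed
  fix f assume f: "(\<forall>v\<in>V. tilde I A par f v = delta z v) \<and> (\<forall>y\<in>section_of I A z. f y = hom_dim I A par z y) \<and> (\<forall>v. v \<notin> V \<longrightarrow> f v = 0)"
  define d where "d v = f v - UU z v" for v
  have "d v = 0" for v
  proof (rule unique_from_section[OF z])
    show "\<forall>v\<in>V. d v + d (tau v) - (\<Sum>w\<in>preds v. d w) = 0"
    proof
      fix v assume v: "v \<in> V"
      have "f v + f (tau v) - (\<Sum>w\<in>preds v. f w) = (if v = z then 1 else 0)"
        using f v unfolding tilde_eq delta_def by simp
      then show "d v + d (tau v) - (\<Sum>w\<in>preds v. d w) = 0"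
        unfolding d_def sum_subtractf using U_tilde[OF z v] by simp
    qed
    show "\<forall>i\<in>I. d (i, pz z i) = 0"
    proof
      fix i assume i: "i \<in> I"
      have "(i, pz z i) \<in> section_of I A z" unfolding section_of_eq[OF z] using i by blast
      then have "f (i, pz z i) = HH z (i, pz z i)" using f unfolding hom_dim_eq by simp
      then show "d (i, pz z i) = 0" unfolding d_def using region[OF z, of "(i, pz z i)"] by simp
    qed
    show "\<forall>v. v \<notin> V \<longrightarrow> d v = 0" unfolding d_def using f UU_nonV[OF z] by simp
  qed
  then show "f = UU z" unfolding d_def by (simp add: fun_eq_iff)
qed

lemma func_id:
  assumes x: "x \<in> V"
  shows "UU x v - delta x v + UU (tau_inv x) v = (\<Sum>y\<in>succs x. UU y v)"
proof -
  have tx: "tau_inv x \<in> V" using x V_tau by simp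
  have yV: "y \<in> V" "snd y = snd x + 1" if "y \<in> succs x" for y using succs_layer that by auto
  define F where "F v = UU x v - (if v = x then 1 else 0) + UU (tau_inv x) v - (\<Sum>y\<in>succs x. UU y v)" for v
  have "F v = 0"
  proof (induction v rule: layer_induct[where L="snd x"])
    case (1 v)
    have "(\<Sum>y\<in>succs x. UU y v) = 0"
    proof (rule sum.neutral, intro ballI)
      fix y assume "y \<in> succs x"
      then have "snd v < snd y" using yV 1 by simp
      then show "UU y v = 0" by (rule homg_low)
    qed
    then show ?case unfolding F_def using 1 homg_low[of v x] homg_low[of v "tau_inv x"] by auto
  next
    case (2 v)
    show ?case
    proof (cases "v \<in> V")
      case False
      have "(\<Sum>y\<in>succs x. UU y v) = 0"
      proof (rule sum.neutral, intro ballI)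
        fix y assume "y \<in> succs x"
        then show "UU y v = 0" using UU_nonV[OF yV(1) False] by simp
      qed
      then show ?thesis unfolding F_def using False x UU_nonV[OF x] UU_nonV[OF tx] by auto
    next
      case vV: True
      have pz0: "(\<Sum>w\<in>preds v. F w) = 0" by (rule sum.neutral) (use 2 preds_layer in fastforce)
      have tz0: "F (tau v) = 0" using 2 by simp
      have m1: "UU x v + UU x (tau v) - (\<Sum>w\<in>preds v. UU x w) = (if v = x then 1 else 0)" by (rule U_tilde[OF x vV])
      have m2: "UU (tau_inv x) v + UU (tau_inv x) (tau v) - (\<Sum>w\<in>preds v. UU (tau_inv x) w) = (if v = tau_inv x then 1 else 0)"
        by (rule U_tilde[OF tx vV])
      have m3: "(\<Sum>y\<in>succs x. UU y v) + (\<Sum>y\<in>succs x. UU y (tau v)) - (\<Sum>w\<in>preds v. \<Sum>y\<in>succs x. UU y w)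
          = (\<Sum>y\<in>succs x. if v = y then 1 else 0)"
      proof -
        have "(\<Sum>y\<in>succs x. UU y v + UU y (tau v) - (\<Sum>w\<in>preds v. UU y w)) = (\<Sum>y\<in>succs x. if v = y then 1 else 0)"
          by (rule sum.cong[OF refl]) (rule U_tilde, use yV vV in auto)
        then show ?thesis by (simp add: sum.distrib sum_subtractf sum.swap[of _ "preds v"])
      qed
      have d1: "(\<Sum>y\<in>succs x. (if v = y then 1 else 0)) = (if v \<in> succs x then 1 else (0::int))"
        using succs_fin by (simp add: sum.delta)
      have d2: "(\<Sum>w\<in>preds v. (if w = x then 1 else 0)) = (if x \<in> preds v then 1 else (0::int))"
        using preds_fin by (simp add: sum.delta')
      have d3: "(if tau v = x then 1 else 0) = (if v = tau_inv x then (1::int) else 0)"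
        by (metis tau_tau_inv)
      have d4: "(if v \<in> succs x then 1 else 0) = (if x \<in> preds v then (1::int) else 0)" by (simp add: succ_iff_pred)
      have sF: "(\<Sum>w\<in>preds v. F w) = (\<Sum>w\<in>preds v. UU x w) - (\<Sum>w\<in>preds v. (if w = x then 1 else 0)) + (\<Sum>w\<in>preds v. UU (tau_inv x) w) - (\<Sum>w\<in>preds v. \<Sum>y\<in>succs x. UU y w)"
        unfolding F_def by (simp add: sum.distrib sum_subtractf)
      have "F v = - F (tau v) + (\<Sum>w\<in>preds v. F w)"
        using m1 m2 m3 d1 d2 d3 d4 sF unfolding F_def by simp
      then show ?thesis using pz0 tz0 by simp
    qed
  qed
  then show ?thesis unfolding F_def delta_def by (simp add: eq_commute[of v x])
qed

lemma hammock_count: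
  assumes z: "z \<in> V"
  shows "count (hammock I A par z) y = (if y \<in> V then nat (HH z y) else 0)"
proof -
  define f where "f y = (if y \<in> V then nat (HH z y) else 0)" for y
  have sub: "{y. 0 < f y} \<subseteq> I \<times> {snd z .. snd (NN z)}"
  proof
    fix y assume "y \<in> {y. 0 < f y}"
    then have yV: "y \<in> V" and h: "HH z y \<noteq> 0" unfolding f_def by (auto split: if_splits)
    have "snd y \<ge> snd z"
    proof (rule ccontr)
      assume "\<not> snd y \<ge> snd z"
      then have "HH z y = 0" by (intro homg_low) simp
      with h show False by simp
    qed
    moreover have "snd y < snd (NN z) - 1" using h NN_props(4)[OF z, of y] by fastforce
    ultimately show "y \<in> I \<times> {snd z .. snd (NN z)}" using yV V_iff' by (cases y) auto
  qed
  have fin: "finite {y. 0 < f y}" by (rule finite_subset[OF sub]) (use finI in simp)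
  have cnt: "count (Abs_multiset f) = f" by (rule count_Abs_multiset[OF fin])
  have "hammock I A par z = Abs_multiset f"
    unfolding hammock_def
  proof (rule the_equality)
    show "\<forall>y. count (Abs_multiset f) y = (if y \<in> V then nat (hom_dim I A par z y) else 0)"
      unfolding cnt f_def hom_dim_eq by simp
    fix M assume M: "\<forall>y. count M y = (if y \<in> V then nat (hom_dim I A par z y) else 0)"
    show "M = Abs_multiset f"
    proof (rule multiset_eqI)
      fix y show "count M y = count (Abs_multiset f) y" using spec[OF M, of y] unfolding cnt f_def hom_dim_eq by simp
    qed
  qed
  then show ?thesis using cnt f_def by simp
qed

end

theorem lemma4p5:
  fixes I :: "'i set" and A :: "('i \<times> 'i) set" and par :: "'i \<Rightarrow> bool" and x :: "'i \<times> int"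
  assumes "dynkin_quiver I A"
    and "alternating A par"
    and "x \<in> zq_V I par"
  shows "mq_iso I par
           (tensor (mu I A par x (Yobj I A par x)) (Yobj I A par (tau_inv x)))
           (tensor (Fobj I A par x) (tensor_set (Yobj I A par) (zq_succs I A par x)))"
proof -
  interpret dq I A par using assms(1,2) by unfold_locales
  have x: "x \<in> V" using assms(3) .
  have tx: "tau_inv x \<in> V" using x V_tau by simp
  have nV: "NN x \<in> V" by (rule NN_props(1)[OF x])
  have sV: "tau (NN x) \<in> V" using nV V_tau by simp
  have yV: "y \<in> V" if "y \<in> succs x" for y using succs_layer that by auto
  have serre_eq: "serre I A par x = tau (NN x)"
    unfolding serre_def
  proof (rule the_equality)
    show "tau (NN x) \<in> V \<and> (\<forall>y\<in>V. hom_dim I A par y (tau (NN x)) = hom_dim I A par x y)"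
      using sV serre_prop[OF x] unfolding hom_dim_eq by simp
    fix z assume "z \<in> V \<and> (\<forall>y\<in>V. hom_dim I A par y z = hom_dim I A par x y)"
    then show "z = tau (NN x)" using serre_unique[OF x] unfolding hom_dim_eq by blast
  qed
  have shift_eq: "shift I A par x = NN x" unfolding shift_def serre_eq by simp
  have ms: "hammock I A par x - {#x#} + {#serre I A par x#} + hammock I A par (tau_inv x)
      = {#serre I A par x, shift I A par x#} + (\<Sum>a\<in>succs x. hammock I A par a)"
  proof (rule multiset_eqI)
    fix v
    show "count (hammock I A par x - {#x#} + {#serre I A par x#} + hammock I A par (tau_inv x)) v
        = count ({#serre I A par x, shift I A par x#} + (\<Sum>a\<in>succs x. hammock I A par a)) v"
    proof (cases "v \<in> V")
      case False
      have "(\<Sum>a\<in>succs x. count (hammock I A par a) v) = 0"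
        by (rule sum.neutral) (use False yV hammock_count in auto)
      moreover have "v \<noteq> x" "v \<noteq> tau (NN x)" "v \<noteq> NN x" using False x sV nV by auto
      ultimately show ?thesis using False hammock_count[OF x, of v] hammock_count[OF tx, of v]
        unfolding serre_eq shift_eq by (simp add: count_sum)
    next
      case vV: True
      have cm: "HH x v + HH (tau_inv x) v - (\<Sum>y\<in>succs x. HH y v) = (if x = v then 1 else 0) + (if v = NN x then 1 else 0)"
        by (rule contra_mesh[OF x vV])
      have s1: "int (\<Sum>a\<in>succs x. count (hammock I A par a) v) = (\<Sum>y\<in>succs x. HH y v)"
      proof -
        have "int (\<Sum>a\<in>succs x. count (hammock I A par a) v) = (\<Sum>a\<in>succs x. int (count (hammock I A par a) v))"
          by (simp add: of_nat_sum)
        also have "\<dots> = (\<Sum>y\<in>succs x. HH y v)"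
        proof (rule sum.cong[OF refl])
          fix y assume y: "y \<in> succs x"
          show "int (count (hammock I A par y) v) = HH y v"
            using hammock_count[OF yV[OF y], of v] vV HH_nn[OF yV[OF y], of v] by simp
        qed
        finally show ?thesis .
      qed
      have c1: "int (count (hammock I A par x) v) = HH x v" using hammock_count[OF x, of v] vV HH_nn[OF x, of v] by simp
      have c2: "int (count (hammock I A par (tau_inv x)) v) = HH (tau_inv x) v"
        using hammock_count[OF tx, of v] vV HH_nn[OF tx, of v] by simp
      have hxx: "HH x x = 1" using homg_self[of "max 0" x] x by simp
      have lhs: "int (count (hammock I A par x - {#x#} + {#serre I A par x#} + hammock I A par (tau_inv x)) v)
          = HH x v - (if x = v then 1 else 0) + (if v = tau (NN x) then 1 else 0) + HH (tau_inv x) v"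
      proof (cases "v = x")
        case True
        then have "count (hammock I A par x) v = 1" using c1 hxx by simp
        then show ?thesis using True c2 hxx unfolding serre_eq by simp
      next
        case False
        then show ?thesis using c1 c2 unfolding serre_eq by simp
      qed
      have rhs: "int (count ({#serre I A par x, shift I A par x#} + (\<Sum>a\<in>succs x. hammock I A par a)) v)
          = (if v = tau (NN x) then 1 else 0) + (if v = NN x then 1 else 0) + (\<Sum>y\<in>succs x. HH y v)"
      proof -
        have a: "count ({#serre I A par x, shift I A par x#} + (\<Sum>a\<in>succs x. hammock I A par a)) v
            = count {#tau (NN x), NN x#} v + (\<Sum>a\<in>succs x. count (hammock I A par a) v)"
          unfolding serre_eq shift_eq by (simp add: count_sum)
        have b: "int (count {#tau (NN x), NN x#} v) = (if v = tau (NN x) then 1 else 0) + (if v = NN x then 1 else 0)"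
          by simp
        show ?thesis unfolding a of_nat_add b s1 ..
      qed
      have "int (count (hammock I A par x - {#x#} + {#serre I A par x#} + hammock I A par (tau_inv x)) v)
          = int (count ({#serre I A par x, shift I A par x#} + (\<Sum>a\<in>succs x. hammock I A par a)) v)"
        using lhs rhs cm by linarith
      then show ?thesis by simp
    qed
  qed
  have fn: "\<forall>v\<in>V. hfun I A par x v - delta x v + hfun I A par (tau_inv x) v = 0 + (\<Sum>a\<in>succs x. hfun I A par a v)"
  proof
    fix v assume "v \<in> V"
    have "(\<Sum>a\<in>succs x. hfun I A par a v) = (\<Sum>a\<in>succs x. UU a v)"
      by (rule sum.cong[OF refl]) (simp add: hfun_eq[OF yV])
    then show "hfun I A par x v - delta x v + hfun I A par (tau_inv x) v = 0 + (\<Sum>a\<in>succs x. hfun I A par a v)"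
      using func_id[OF x, of v] hfun_eq[OF x] hfun_eq[OF tx] by simp
  qed
  show ?thesis
    unfolding mq_iso_def tensor_def mu_def Yobj_def Fobj_def tensor_set_def
    using ms fn by simp
qed


end
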